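(* Let $P,Q$ be probability measures on $(\Omega,\mathcal{M})$, $g$ a bounded measurable real function on $\Omega$, and $\gamma\in\mathbb{R}\setminus\{0\}$. Define $$\Xi_+^\gamma(Q\|P,g)=\inf_{\beta>\gamma,\beta\ne0}\Big\{\frac1\beta\log\int e^{\beta g}dP-\frac1\gamma\log\int e^{\gamma g}dP+\frac{1}{\beta-\gamma}R_{\beta/(\beta-\gamma)}(Q\|P)\Big\},$$ $$\Xi_-^\gamma(Q\|P,g)=\sup_{\beta<\gamma,\beta\ne0}\Big\{\frac1\beta\log\int e^{\beta g}dP-\frac1\gamma\log\int e^{\gamma g}dP-\frac{1}{\gamma-\beta}R_{\gamma/(\gamma-\beta)}(P\|Q)\Big\}.$$ Then $$\Xi_-^\gamma(Q\|P,g)\le\frac1\gamma\log\int e^{\gamma g}dQ-\frac1\gamma\log\int e^{\gamma g}dP\le\Xi_+^\gamma(Q\|P,g).$$ Moreover: (1) $\Xi_-^\gamma(Q\|P,g)=-\Xi_+^{-\gamma}(Q\|P,-g)$; (2) $\pm\Xi_\pm^\gamma(Q\|P,g)\ge0$, and if $g$ is not $P$-a.s. constant then $\Xi_+^\gamma(Q\|P,g)=0$ iff $Q=P$, and $\Xi_-^\gamma(Q\|P,g)=0$ iff $Q=P$.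
   Context: Rényi divergence: let $\nu$ be a $\sigma$-finite positive measure with $dP=p\,d\nu$, $dQ=q\,d\nu$. For $\alpha\in(0,1)$, $R_\alpha(Q\|P)=\frac{1}{\alpha(\alpha-1)}\log\int_{p>0}q^\alpha p^{1-\alpha}\,d\nu$; for $\alpha>1$, the same formula if $Q\ll P$ and $R_\alpha(Q\|P)=+\infty$ if $Q\not\ll P$; for $\alpha<0$, $R_\alpha(Q\|P)=R_{1-\alpha}(P\|Q)$. *)

theory Defs
  imports "HOL-Probability.Probability"
begin

text \<open>Extended-real value of \<open>(1/(\<alpha>(\<alpha>-1))) * log I\<close> for \<open>I \<in> [0,\<infinity>]\<close>,
  with \<open>log 0 = -\<infinity>\<close> and \<open>log \<infinity> = \<infinity>\<close>.\<close>
definition renyi_val :: "real \<Rightarrow> ennreal \<Rightarrow> ereal" where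
  "renyi_val \<alpha> I =
     (if I = 0 then (if \<alpha> * (\<alpha> - 1) < 0 then \<infinity> else - \<infinity>)
      else if I = \<top> then (if \<alpha> * (\<alpha> - 1) > 0 then \<infinity> else - \<infinity>)
      else ereal (ln (enn2real I) / (\<alpha> * (\<alpha> - 1))))"

text \<open>Renyi divergence \<open>R_\<alpha>(Q||P)\<close> for \<open>\<alpha> > 0\<close>, \<open>\<alpha> \<noteq> 1\<close>, computed with
  respect to some sigma-finite dominating measure \<open>\<nu>\<close> with densities \<open>p, q\<close>
  (the value does not depend on the choice).\<close>
definition renyi_pos :: "real \<Rightarrow> 'a measure \<Rightarrow> 'a measure \<Rightarrow> ereal" where
  "renyi_pos \<alpha> Q P =
     (SOME r. \<exists>\<nu> p q. sigma_finite_measure \<nu> \<and> sets \<nu> = sets P \<and>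
        p \<in> borel_measurable \<nu> \<and> q \<in> borel_measurable \<nu> \<and>
        (\<forall>x \<in> space \<nu>. 0 \<le> p x \<and> 0 \<le> q x) \<and>
        P = density \<nu> (\<lambda>x. ennreal (p x)) \<and> Q = density \<nu> (\<lambda>x. ennreal (q x)) \<and>
        r = (if 1 < \<alpha> \<and> \<not> absolutely_continuous P Q then \<infinity>
             else renyi_val \<alpha>
               (\<integral>\<^sup>+ x. ennreal (indicator {y. 0 < p y} x * (q x powr \<alpha>) * (p x powr (1 - \<alpha>))) \<partial>\<nu>)))"

text \<open>Renyi divergence \<open>R_\<alpha>(Q||P)\<close>; for \<open>\<alpha> < 0\<close> it is \<open>R_{1-\<alpha>}(P||Q)\<close>.
  (Only used for \<open>\<alpha> \<notin> {0,1}\<close>.)\<close>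
definition renyi :: "real \<Rightarrow> 'a measure \<Rightarrow> 'a measure \<Rightarrow> ereal" where
  "renyi \<alpha> Q P = (if \<alpha> < 0 then renyi_pos (1 - \<alpha>) P Q else renyi_pos \<alpha> Q P)"

definition cgf_term :: "'a measure \<Rightarrow> ('a \<Rightarrow> real) \<Rightarrow> real \<Rightarrow> real" where
  "cgf_term P g \<beta> = ln (integral\<^sup>L P (\<lambda>x. exp (\<beta> * g x))) / \<beta>"

definition Xi_plus :: "real \<Rightarrow> 'a measure \<Rightarrow> 'a measure \<Rightarrow> ('a \<Rightarrow> real) \<Rightarrow> ereal" where
  "Xi_plus \<gamma> Q P g =
     (INF \<beta> \<in> {\<beta>. \<beta> > \<gamma> \<and> \<beta> \<noteq> 0}.
        ereal (cgf_term P g \<beta> - cgf_term P g \<gamma>)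
        + ereal (1 / (\<beta> - \<gamma>)) * renyi (\<beta> / (\<beta> - \<gamma>)) Q P)"

definition Xi_minus :: "real \<Rightarrow> 'a measure \<Rightarrow> 'a measure \<Rightarrow> ('a \<Rightarrow> real) \<Rightarrow> ereal" where
  "Xi_minus \<gamma> Q P g =
     (SUP \<beta> \<in> {\<beta>. \<beta> < \<gamma> \<and> \<beta> \<noteq> 0}.
        ereal (cgf_term P g \<beta> - cgf_term P g \<gamma>)
        - ereal (1 / (\<gamma> - \<beta>)) * renyi (\<gamma> / (\<gamma> - \<beta>)) P Q)"

end

theory Submission
  imports Defs
begin


lemma young_pt:
  fixes x y U V c d :: real
  assumes "c > 0" "d > 0" "c + d = 1" "x \<ge> 0" "y \<ge> 0" "U > 0" "V > 0"
  shows "x powr c * y powr d \<le> U powr c * V powr d * (c * x / U + d * y / V)"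
proof (cases "x = 0 \<or> y = 0")
  case True
  then show ?thesis using assms by (auto intro!: mult_nonneg_nonneg add_nonneg_nonneg)
next
  case False
  then have xy: "x > 0" "y > 0" using assms by auto
  have "(x/U) powr c * (y/V) powr d \<le> c * (x/U) + d * (y/V)"
    using Youngs_inequality_0[of c d "x/U" "y/V"] assms xy by auto
  moreover have "(x/U) powr c * (y/V) powr d = x powr c * y powr d / (U powr c * V powr d)"
    using assms xy by (simp add: powr_divide)
  moreover have "U powr c * V powr d > 0" using assms by simp
  ultimately show ?thesis
    by (simp add: divide_le_eq mult.commute)
qed

lemma holder_w:
  fixes M :: "'a measure" and u v :: "'a \<Rightarrow> real" and c d U V :: real
  assumes cd: "c > 0" "d > 0" "c + d = 1"
    and meas: "u \<in> borel_measurable M" "v \<in> borel_measurable M"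
    and nn: "\<And>x. x \<in> space M \<Longrightarrow> u x \<ge> 0" "\<And>x. x \<in> space M \<Longrightarrow> v x \<ge> 0"
    and UV: "(\<integral>\<^sup>+x. ennreal (u x) \<partial>M) = ennreal U" "(\<integral>\<^sup>+x. ennreal (v x) \<partial>M) = ennreal V"
    and UVnn: "U \<ge> 0" "V \<ge> 0"
  shows "(\<integral>\<^sup>+x. ennreal (u x powr c * v x powr d) \<partial>M) \<le> ennreal (U powr c * V powr d)"
proof (cases "U = 0 \<or> V = 0")
  case True
  then show ?thesis
  proof
    assume "U = 0"
    then have "AE x in M. ennreal (u x) = 0"
      using UV(1) meas by (subst nn_integral_0_iff_AE[symmetric]) auto
    then have "AE x in M. ennreal (u x powr c * v x powr d) = 0"
      using AE_space by eventually_elim (use nn in auto)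
    then have "(\<integral>\<^sup>+x. ennreal (u x powr c * v x powr d) \<partial>M) = 0"
      by (intro nn_integral_0_iff_AE[THEN iffD2]) (use meas in measurable)
    then show ?thesis by simp
  next
    assume "V = 0"
    then have "AE x in M. ennreal (v x) = 0"
      using UV(2) meas by (subst nn_integral_0_iff_AE[symmetric]) auto
    then have "AE x in M. ennreal (u x powr c * v x powr d) = 0"
      using AE_space by eventually_elim (use nn in auto)
    then have "(\<integral>\<^sup>+x. ennreal (u x powr c * v x powr d) \<partial>M) = 0"
      by (intro nn_integral_0_iff_AE[THEN iffD2]) (use meas in measurable)
    then show ?thesis by simp
  qed
next
  case False
  then have pos: "U > 0" "V > 0" using UVnn by auto
  define K where "K = U powr c * V powr d"
  have K: "K \<ge> 0" unfolding K_def by simp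
  have "(\<integral>\<^sup>+x. ennreal (u x powr c * v x powr d) \<partial>M)
      \<le> (\<integral>\<^sup>+x. ennreal (K * (c/U)) * ennreal (u x) + ennreal (K * (d/V)) * ennreal (v x) \<partial>M)"
  proof (rule nn_integral_mono)
    fix x assume x: "x \<in> space M"
    have "u x powr c * v x powr d \<le> K * (c * u x / U + d * v x / V)"
      unfolding K_def using young_pt[OF cd nn(1)[OF x] nn(2)[OF x] pos] .
    also have "\<dots> = K * (c/U) * u x + K * (d/V) * v x" by (simp add: field_simps)
    finally show "ennreal (u x powr c * v x powr d) \<le> ennreal (K * (c/U)) * ennreal (u x) + ennreal (K * (d/V)) * ennreal (v x)"
      using K cd pos nn[OF x]
      by (simp add: ennreal_mult[symmetric] ennreal_plus[symmetric] del: ennreal_plus)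
  qed
  also have "\<dots> = ennreal (K * (c/U)) * ennreal U + ennreal (K * (d/V)) * ennreal V"
    using meas by (simp add: nn_integral_add nn_integral_cmult UV)
  also have "\<dots> = ennreal (K * (c/U) * U + K * (d/V) * V)"
    using K cd pos by (simp add: ennreal_mult[symmetric] ennreal_plus[symmetric] del: ennreal_plus)
  also have "K * (c/U) * U + K * (d/V) * V = K" using pos cd by (simp add: field_simps flip: distrib_left)
  finally show ?thesis unfolding K_def .
qed


lemma pt_gt1:
  fixes a pA pB f :: real
  assumes a: "a > 1" and nn: "pA \<ge> 0" "pB \<ge> 0" and f: "f > 0"
  shows "(indicator {y. 0 < y} pA * pB powr a * pA powr (1 - a)) powr (1/a)
       * (pA * f powr (a/(a-1))) powr ((a-1)/a) = indicator {y. 0 < y} pA * pB * f"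
proof (cases "pA > 0 \<and> pB > 0")
  case False
  then consider "pA = 0" | "pB = 0" using nn by linarith
  then show ?thesis using a by cases auto
next
  case True
  then have pos: "pA > 0" "pB > 0" by auto
  have "(pB powr a * pA powr (1 - a)) powr (1/a) * (pA * f powr (a/(a-1))) powr ((a-1)/a)
     = exp ((1/a) * (a * ln pB + (1-a) * ln pA) + ((a-1)/a) * (ln pA + (a/(a-1)) * ln f))"
    using pos f a by (simp add: powr_def ln_mult exp_add[symmetric])
  also have "(1/a) * (a * ln pB + (1-a) * ln pA) + ((a-1)/a) * (ln pA + (a/(a-1)) * ln f) = ln pB + ln f"
    using a by (simp add: field_simps)
  also have "exp (ln pB + ln f) = pB * f" using pos f by (simp add: exp_add)
  finally show ?thesis using pos by simp
qed

lemma pt_01: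
  fixes a pA pB f1 f2 :: real
  assumes a: "0 < a" "a < 1" and nn: "pA \<ge> 0" "pB \<ge> 0" and f: "f1 > 0" "f2 > 0"
    and ff: "f1 powr a * f2 powr (1 - a) = 1"
  shows "(pB * f1) powr a * (pA * f2) powr (1 - a) = pB powr a * pA powr (1 - a)"
proof -
  have "(pB * f1) powr a * (pA * f2) powr (1 - a) = (pB powr a * pA powr (1 - a)) * (f1 powr a * f2 powr (1 - a))"
    using nn f by (simp add: powr_mult)
  then show ?thesis using ff by simp
qed

lemma AE_abs_cont_dens:
  fixes \<nu> :: "'a measure"
  assumes pA: "pA \<in> borel_measurable \<nu>" and pB: "pB \<in> borel_measurable \<nu>"
    and nnB: "\<And>x. x \<in> space \<nu> \<Longrightarrow> pB x \<ge> 0"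
    and ac: "absolutely_continuous (density \<nu> (\<lambda>x. ennreal (pA x))) (density \<nu> (\<lambda>x. ennreal (pB x)))"
  shows "AE x in \<nu>. pA x \<le> 0 \<longrightarrow> pB x = 0"
proof -
  define N where "N = {x \<in> space \<nu>. pA x \<le> 0}"
  have N: "N \<in> sets \<nu>" unfolding N_def using pA by measurable
  have "emeasure (density \<nu> (\<lambda>x. ennreal (pA x))) N = (\<integral>\<^sup>+x. ennreal (pA x) * indicator N x \<partial>\<nu>)"
    using N pA by (simp add: emeasure_density)
  also have "\<dots> = 0"
    by (rule nn_integral_zero'[THEN trans[rotated]], rule AE_I2) (auto simp: N_def indicator_def ennreal_neg)
  finally have N0: "emeasure (density \<nu> (\<lambda>x. ennreal (pA x))) N = 0" .
  have "N \<in> null_sets (density \<nu> (\<lambda>x. ennreal (pA x)))" by (rule null_setsI[OF N0]) (simp add: N)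
  then have "N \<in> null_sets (density \<nu> (\<lambda>x. ennreal (pB x)))"
    using ac unfolding absolutely_continuous_def by auto
  then have "(\<integral>\<^sup>+x. ennreal (pB x) * indicator N x \<partial>\<nu>) = 0"
    using N pB by (simp add: emeasure_density null_sets_def)
  then have "AE x in \<nu>. ennreal (pB x) * indicator N x = 0"
    using N pB by (subst (asm) nn_integral_0_iff_AE) auto
  then show ?thesis
    using AE_space by eventually_elim (use nnB in \<open>auto simp: N_def indicator_def\<close>)
qed


lemma core_gt1:
  fixes \<nu> :: "'a measure" and pA pB f :: "'a \<Rightarrow> real" and a Iv Fv :: real
  assumes a: "a > 1"
    and meas: "pA \<in> borel_measurable \<nu>" "pB \<in> borel_measurable \<nu>" "f \<in> borel_measurable \<nu>"
    and nn: "\<And>x. x \<in> space \<nu> \<Longrightarrow> pA x \<ge> 0" "\<And>x. x \<in> space \<nu> \<Longrightarrow> pB x \<ge> 0"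
    and fpos: "\<And>x. x \<in> space \<nu> \<Longrightarrow> f x > 0"
    and ac: "absolutely_continuous (density \<nu> (\<lambda>x. ennreal (pA x))) (density \<nu> (\<lambda>x. ennreal (pB x)))"
    and I: "(\<integral>\<^sup>+x. ennreal (indicator {y. 0 < pA y} x * (pB x powr a) * (pA x powr (1 - a))) \<partial>\<nu>) = ennreal Iv"
    and F: "(\<integral>\<^sup>+x. ennreal (pA x * f x powr (a/(a-1))) \<partial>\<nu>) = ennreal Fv"
    and nnIF: "Iv \<ge> 0" "Fv \<ge> 0"
  shows "(\<integral>\<^sup>+x. ennreal (pB x * f x) \<partial>\<nu>) \<le> ennreal (Iv powr (1/a) * Fv powr ((a-1)/a))"
proof -
  have AE0: "AE x in \<nu>. pA x \<le> 0 \<longrightarrow> pB x = 0"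
    using AE_abs_cont_dens[OF meas(1,2) nn(2) ac] .
  have "(\<integral>\<^sup>+x. ennreal (pB x * f x) \<partial>\<nu>) =
     (\<integral>\<^sup>+x. ennreal ((indicator {y. 0 < pA y} x * (pB x powr a) * (pA x powr (1 - a))) powr (1/a)
          * (pA x * f x powr (a/(a-1))) powr ((a-1)/a)) \<partial>\<nu>)"
  proof (rule nn_integral_cong_AE)
    show "AE x in \<nu>. ennreal (pB x * f x) = ennreal ((indicator {y. 0 < pA y} x * (pB x powr a) * (pA x powr (1 - a))) powr (1/a)
          * (pA x * f x powr (a/(a-1))) powr ((a-1)/a))"
      using AE0 AE_space
    proof eventually_elim
      case (elim x)
      have "(indicator {y. 0 < pA y} x * (pB x powr a) * (pA x powr (1 - a))) powr (1/a)
          * (pA x * f x powr (a/(a-1))) powr ((a-1)/a) = indicator {y. 0 < y} (pA x) * pB x * f x"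
        using pt_gt1[OF a nn(1)[OF elim(2)] nn(2)[OF elim(2)] fpos[OF elim(2)]]
        by (simp add: indicator_def)
      then show ?case using elim by (auto simp: indicator_def)
    qed
  qed
  also have "\<dots> \<le> ennreal (Iv powr (1/a) * Fv powr ((a-1)/a))"
  proof (rule holder_w)
    show "0 < 1/a" "0 < (a-1)/a" "1/a + (a-1)/a = 1" using a by (auto simp: field_simps)
  qed (use meas nn fpos I F nnIF in \<open>auto intro!: mult_nonneg_nonneg\<close>)
  finally show ?thesis .
qed

lemma core_01:
  fixes \<nu> :: "'a measure" and pA pB f1 f2 :: "'a \<Rightarrow> real" and a F1 F2 :: real
  assumes a: "0 < a" "a < 1"
    and meas: "pA \<in> borel_measurable \<nu>" "pB \<in> borel_measurable \<nu>" "f1 \<in> borel_measurable \<nu>" "f2 \<in> borel_measurable \<nu>"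
    and nn: "\<And>x. x \<in> space \<nu> \<Longrightarrow> pA x \<ge> 0" "\<And>x. x \<in> space \<nu> \<Longrightarrow> pB x \<ge> 0"
    and fpos: "\<And>x. x \<in> space \<nu> \<Longrightarrow> f1 x > 0" "\<And>x. x \<in> space \<nu> \<Longrightarrow> f2 x > 0"
    and ff: "\<And>x. x \<in> space \<nu> \<Longrightarrow> f1 x powr a * f2 x powr (1 - a) = 1"
    and F1: "(\<integral>\<^sup>+x. ennreal (pB x * f1 x) \<partial>\<nu>) = ennreal F1"
    and F2: "(\<integral>\<^sup>+x. ennreal (pA x * f2 x) \<partial>\<nu>) = ennreal F2"
    and nnF: "F1 \<ge> 0" "F2 \<ge> 0"
  shows "(\<integral>\<^sup>+x. ennreal (indicator {y. 0 < pA y} x * (pB x powr a) * (pA x powr (1 - a))) \<partial>\<nu>)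
     \<le> ennreal (F1 powr a * F2 powr (1 - a))"
proof -
  have "(\<integral>\<^sup>+x. ennreal (indicator {y. 0 < pA y} x * (pB x powr a) * (pA x powr (1 - a))) \<partial>\<nu>)
     \<le> (\<integral>\<^sup>+x. ennreal ((pB x * f1 x) powr a * (pA x * f2 x) powr (1 - a)) \<partial>\<nu>)"
  proof (rule nn_integral_mono)
    fix x assume x: "x \<in> space \<nu>"
    have "(pB x * f1 x) powr a * (pA x * f2 x) powr (1 - a) = pB x powr a * pA x powr (1 - a)"
      using pt_01[OF a nn(1)[OF x] nn(2)[OF x] fpos(1)[OF x] fpos(2)[OF x] ff[OF x]] .
    then show "ennreal (indicator {y. 0 < pA y} x * (pB x powr a) * (pA x powr (1 - a)))
       \<le> ennreal ((pB x * f1 x) powr a * (pA x * f2 x) powr (1 - a))"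
      by (auto simp: indicator_def intro!: ennreal_leI)
  qed
  also have "\<dots> \<le> ennreal (F1 powr a * F2 powr (1 - a))"
  proof -
    have fnn: "\<And>x. x \<in> space \<nu> \<Longrightarrow> f1 x \<ge> 0" "\<And>x. x \<in> space \<nu> \<Longrightarrow> f2 x \<ge> 0"
      using fpos by (auto simp: less_imp_le)
    show ?thesis
      by (rule holder_w) (use a meas nn fnn F1 F2 nnF in \<open>auto intro!: mult_nonneg_nonneg\<close>)
  qed
  finally show ?thesis .
qed


definition wit :: "'a measure \<Rightarrow> ('a \<Rightarrow> real) \<Rightarrow> ('a \<Rightarrow> real) \<Rightarrow> 'a measure \<Rightarrow> 'a measure \<Rightarrow> bool" where
  "wit \<nu> p q P Q \<longleftrightarrow> sigma_finite_measure \<nu> \<and> sets \<nu> = sets P \<and>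
        p \<in> borel_measurable \<nu> \<and> q \<in> borel_measurable \<nu> \<and>
        (\<forall>x \<in> space \<nu>. 0 \<le> p x \<and> 0 \<le> q x) \<and>
        P = density \<nu> (\<lambda>x. ennreal (p x)) \<and> Q = density \<nu> (\<lambda>x. ennreal (q x))"

definition Iint :: "real \<Rightarrow> 'a measure \<Rightarrow> ('a \<Rightarrow> real) \<Rightarrow> ('a \<Rightarrow> real) \<Rightarrow> ennreal" where
  "Iint \<alpha> \<nu> p q = (\<integral>\<^sup>+ x. ennreal (indicator {y. 0 < p y} x * (q x powr \<alpha>) * (p x powr (1 - \<alpha>))) \<partial>\<nu>)"

lemma real_dens_ex:
  assumes fin: "finite_measure \<nu>" and N: "finite_measure N" and ac: "absolutely_continuous \<nu> N" and s: "sets N = sets \<nu>"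
  shows "\<exists>D. D \<in> borel_measurable \<nu> \<and> (\<forall>x. 0 \<le> D x) \<and> N = density \<nu> (\<lambda>x. ennreal (D x))"
proof -
  interpret \<nu>: finite_measure \<nu> by fact
  obtain D where D: "D \<in> borel_measurable \<nu>" "AE x in \<nu>. RN_deriv \<nu> N x = ennreal (D x)" "\<And>x. 0 \<le> D x"
    using \<nu>.real_RN_deriv[OF N ac s] by metis
  have "N = density \<nu> (RN_deriv \<nu> N)" using \<nu>.density_RN_deriv[OF ac s] by simp
  also have "\<dots> = density \<nu> (\<lambda>x. ennreal (D x))"
    using D by (intro density_cong) auto
  finally show ?thesis using D by blast
qed

lemma wit_ex:
  assumes P: "prob_space P" and Q: "prob_space Q" and s: "sets Q = sets P"
  shows "\<exists>\<nu> p q. wit \<nu> p q P Q"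
proof -
  define \<nu> where "\<nu> = sup_measure' P Q"
  have sp: "space Q = space P" using sets_eq_imp_space_eq[OF s] .
  have sv: "sets \<nu> = sets P" "space \<nu> = space P" unfolding \<nu>_def using s by auto
  have le: "emeasure \<nu> X \<le> emeasure P X + emeasure Q X" if X: "X \<in> sets P" for X
    unfolding \<nu>_def using s X
    by (subst emeasure_sup_measure') (auto intro!: SUP_least add_mono emeasure_mono simp: s)
  have "emeasure \<nu> (space \<nu>) \<noteq> \<infinity>"
  proof -
    have "emeasure \<nu> (space \<nu>) \<le> emeasure P (space P) + emeasure Q (space P)"
      using le[of "space P"] sv by simp
    also have "\<dots> < \<infinity>" using P Q sp prob_space.emeasure_space_1[OF Q] by (simp add: prob_space.emeasure_space_1)
    finally show ?thesis by simp
  qed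
  then have fin: "finite_measure \<nu>" by (rule finite_measureI)
  interpret \<nu>: finite_measure \<nu> by fact
  have acP: "absolutely_continuous \<nu> P"
    unfolding absolutely_continuous_def null_sets_def
    using le_emeasure_sup_measure'1[OF s] sv unfolding \<nu>_def
    by (auto, metis le_zero_eq)
  have acQ: "absolutely_continuous \<nu> Q"
    unfolding absolutely_continuous_def null_sets_def
    using le_emeasure_sup_measure'2[OF s] sv s unfolding \<nu>_def
    by (auto, metis le_zero_eq)
  obtain p where p: "p \<in> borel_measurable \<nu>" "\<forall>x. 0 \<le> p x" "P = density \<nu> (\<lambda>x. ennreal (p x))"
    using real_dens_ex[OF fin _ acP] P sv by (auto simp: prob_space_def)
  obtain q where q: "q \<in> borel_measurable \<nu>" "\<forall>x. 0 \<le> q x" "Q = density \<nu> (\<lambda>x. ennreal (q x))"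
    using real_dens_ex[OF fin _ acQ] Q sv s by (auto simp: prob_space_def)
  have "wit \<nu> p q P Q" unfolding wit_def
    using p q sv \<nu>.sigma_finite_measure_axioms by auto
  then show ?thesis by blast
qed

lemma renyi_pos_char:
  assumes P: "prob_space P" and Q: "prob_space Q" and s: "sets Q = sets P"
  shows "\<exists>\<nu> p q. wit \<nu> p q P Q \<and> renyi_pos \<alpha> Q P =
     (if 1 < \<alpha> \<and> \<not> absolutely_continuous P Q then \<infinity> else renyi_val \<alpha> (Iint \<alpha> \<nu> p q))"
proof -
  let ?R = "\<lambda>r. \<exists>\<nu> p q. sigma_finite_measure \<nu> \<and> sets \<nu> = sets P \<and>
        p \<in> borel_measurable \<nu> \<and> q \<in> borel_measurable \<nu> \<and>
        (\<forall>x \<in> space \<nu>. 0 \<le> p x \<and> 0 \<le> q x) \<and>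
        P = density \<nu> (\<lambda>x. ennreal (p x)) \<and> Q = density \<nu> (\<lambda>x. ennreal (q x)) \<and>
        r = (if 1 < \<alpha> \<and> \<not> absolutely_continuous P Q then \<infinity>
             else renyi_val \<alpha>
               (\<integral>\<^sup>+ x. ennreal (indicator {y. 0 < p y} x * (q x powr \<alpha>) * (p x powr (1 - \<alpha>))) \<partial>\<nu>))"
  obtain \<nu> p q where "wit \<nu> p q P Q" using wit_ex[OF P Q s] by blast
  then have "\<exists>r. ?R r" unfolding wit_def by blast
  then have "?R (renyi_pos \<alpha> Q P)" unfolding renyi_pos_def by (rule someI_ex)
  then show ?thesis unfolding wit_def Iint_def by blast
qed

lemma alg_A:
  fixes \<gamma> \<beta> L lI lP :: real
  assumes "\<gamma> > 0" "\<beta> > \<gamma>"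
    and h: "L \<le> (1/(\<beta>/(\<beta>-\<gamma>))) * lI + ((\<beta>/(\<beta>-\<gamma>)-1)/(\<beta>/(\<beta>-\<gamma>))) * lP"
  shows "L/\<gamma> - lP/\<beta> \<le> (1/(\<beta>-\<gamma>)) * (lI / ((\<beta>/(\<beta>-\<gamma>)) * (\<beta>/(\<beta>-\<gamma>) - 1)))"
proof -
  have b: "\<beta> > 0" "\<beta> - \<gamma> > 0" using assms by auto
  have e1: "(1/(\<beta>/(\<beta>-\<gamma>))) = (\<beta>-\<gamma>)/\<beta>" using b by (simp add: field_simps)
  have e2: "((\<beta>/(\<beta>-\<gamma>)-1)/(\<beta>/(\<beta>-\<gamma>))) = \<gamma>/\<beta>" using b by (simp add: field_simps)
  have e3: "(1/(\<beta>-\<gamma>)) * (lI / ((\<beta>/(\<beta>-\<gamma>)) * (\<beta>/(\<beta>-\<gamma>) - 1))) = ((\<beta>-\<gamma>) * lI) / (\<beta>*\<gamma>)"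
    using b assms by (simp add: field_simps power2_eq_square)
  have e4: "L/\<gamma> - lP/\<beta> = (L*\<beta> - \<gamma>*lP) / (\<beta>*\<gamma>)" using b assms by (simp add: field_simps)
  have e5: "((\<beta>-\<gamma>)/\<beta> * lI + \<gamma>/\<beta> * lP) * \<beta> = (\<beta>-\<gamma>) * lI + \<gamma> * lP" using b by (simp add: field_simps)
  have "L \<le> (\<beta>-\<gamma>)/\<beta> * lI + \<gamma>/\<beta> * lP" using h by (simp only: e1 e2)
  then have "L * \<beta> \<le> (\<beta>-\<gamma>) * lI + \<gamma> * lP" using b mult_right_mono[of L _ \<beta>] e5 by fastforce
  then have "(L*\<beta> - \<gamma>*lP) / (\<beta>*\<gamma>) \<le> ((\<beta>-\<gamma>) * lI) / (\<beta>*\<gamma>)"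
    using b assms by (intro divide_right_mono) auto
  then show ?thesis by (simp only: e3 e4)
qed

lemma alg_B:
  fixes \<gamma> \<beta> L lI lP :: real
  assumes "\<gamma> < 0" "\<beta> > 0"
    and h: "lI \<le> (\<beta>/(\<beta>-\<gamma>)) * L + (1 - \<beta>/(\<beta>-\<gamma>)) * lP"
  shows "L/\<gamma> - lP/\<beta> \<le> (1/(\<beta>-\<gamma>)) * (lI / ((\<beta>/(\<beta>-\<gamma>)) * (\<beta>/(\<beta>-\<gamma>) - 1)))"
proof -
  have b: "\<beta> - \<gamma> > 0" using assms by auto
  have e1: "1 - \<beta>/(\<beta>-\<gamma>) = -\<gamma>/(\<beta>-\<gamma>)" using b by (simp add: field_simps)
  have e3: "(1/(\<beta>-\<gamma>)) * (lI / ((\<beta>/(\<beta>-\<gamma>)) * (\<beta>/(\<beta>-\<gamma>) - 1))) = ((\<beta>-\<gamma>) * lI) / (\<beta>*\<gamma>)"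
    using b assms by (simp add: field_simps power2_eq_square)
  have e4: "L/\<gamma> - lP/\<beta> = (L*\<beta> - \<gamma>*lP) / (\<beta>*\<gamma>)" using b assms by (simp add: field_simps)
  have e5: "(\<beta>/(\<beta>-\<gamma>) * L + -\<gamma>/(\<beta>-\<gamma>) * lP) * (\<beta>-\<gamma>) = \<beta> * L - \<gamma> * lP"
  proof -
    have "(\<beta>/(\<beta>-\<gamma>) * L + -\<gamma>/(\<beta>-\<gamma>) * lP) * (\<beta>-\<gamma>) = (\<beta>/(\<beta>-\<gamma>) * (\<beta>-\<gamma>)) * L + (-\<gamma>/(\<beta>-\<gamma>) * (\<beta>-\<gamma>)) * lP"
      by (simp add: algebra_simps)
    also have "\<dots> = \<beta> * L - \<gamma> * lP" using b by simp
    finally show ?thesis .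
  qed
  have "lI \<le> \<beta>/(\<beta>-\<gamma>) * L + -\<gamma>/(\<beta>-\<gamma>) * lP" using h by (simp only: e1)
  then have "lI * (\<beta>-\<gamma>) \<le> \<beta> * L - \<gamma> * lP" using b mult_right_mono[of lI _ "\<beta>-\<gamma>"] e5 by fastforce
  then have "(L*\<beta> - \<gamma>*lP) / (\<beta>*\<gamma>) \<le> ((\<beta>-\<gamma>) * lI) / (\<beta>*\<gamma>)"
    using b assms by (intro divide_right_mono_neg) (auto simp: mult_le_0_iff algebra_simps)
  then show ?thesis by (simp only: e3 e4)
qed

lemma alg_C:
  fixes \<gamma> \<beta> L lI lP :: real
  assumes "\<gamma> < \<beta>" "\<beta> < 0"
    and h: "lP \<le> (1/(1 - \<beta>/(\<beta>-\<gamma>))) * lI + (((1 - \<beta>/(\<beta>-\<gamma>))-1)/(1 - \<beta>/(\<beta>-\<gamma>))) * L"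
  shows "L/\<gamma> - lP/\<beta> \<le> (1/(\<beta>-\<gamma>)) * (lI / ((1 - \<beta>/(\<beta>-\<gamma>)) * ((1 - \<beta>/(\<beta>-\<gamma>)) - 1)))"
proof -
  have b: "\<beta> - \<gamma> > 0" "\<gamma> < 0" using assms by auto
  have e0: "1 - \<beta>/(\<beta>-\<gamma>) = -\<gamma>/(\<beta>-\<gamma>)" using b by (simp add: field_simps)
  have e1: "1/(-\<gamma>/(\<beta>-\<gamma>)) = (\<beta>-\<gamma>)/(-\<gamma>)" using b by (simp add: field_simps)
  have e2: "((-\<gamma>/(\<beta>-\<gamma>))-1)/(-\<gamma>/(\<beta>-\<gamma>)) = \<beta>/\<gamma>" using b by (simp add: field_simps)
  have e3: "(1/(\<beta>-\<gamma>)) * (lI / ((-\<gamma>/(\<beta>-\<gamma>)) * ((-\<gamma>/(\<beta>-\<gamma>)) - 1))) = ((\<beta>-\<gamma>) * lI) / (\<beta>*\<gamma>)"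
    using b assms by (simp add: field_simps power2_eq_square)
  have e4: "L/\<gamma> - lP/\<beta> = (L*\<beta> - \<gamma>*lP) / (\<beta>*\<gamma>)" using b assms by (simp add: field_simps)
  have e5: "((\<beta>-\<gamma>)/(-\<gamma>) * lI + \<beta>/\<gamma> * L) * (-\<gamma>) = (\<beta>-\<gamma>) * lI - \<beta> * L" using b by (simp add: field_simps)
  have "lP \<le> (\<beta>-\<gamma>)/(-\<gamma>) * lI + \<beta>/\<gamma> * L" using h by (simp only: e0 e1 e2)
  then have "lP * (-\<gamma>) \<le> (\<beta>-\<gamma>) * lI - \<beta> * L" using b mult_right_mono[of lP _ "-\<gamma>"] e5 by fastforce
  then have "(L*\<beta> - \<gamma>*lP) / (\<beta>*\<gamma>) \<le> ((\<beta>-\<gamma>) * lI) / (\<beta>*\<gamma>)"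
    using b assms by (intro divide_right_mono) (auto simp: zero_le_mult_iff algebra_simps)
  then show ?thesis by (simp only: e0 e3 e4)
qed


lemma exp_int:
  fixes M :: "'a measure" and g :: "'a \<Rightarrow> real"
  assumes M: "prob_space M" and g: "g \<in> borel_measurable M" and B: "\<forall>x \<in> space M. \<bar>g x\<bar> \<le> B"
  shows "integrable M (\<lambda>x. exp (c * g x))" and "integral\<^sup>L M (\<lambda>x. exp (c * g x)) > 0"
    and "(\<integral>\<^sup>+x. ennreal (exp (c * g x)) \<partial>M) = ennreal (integral\<^sup>L M (\<lambda>x. exp (c * g x)))"
proof -
  interpret prob_space M by fact
  have bd: "\<bar>c * g x\<bar> \<le> \<bar>c\<bar> * B" if "x \<in> space M" for x
    using B that by (simp add: abs_mult mult_left_mono)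
  show int: "integrable M (\<lambda>x. exp (c * g x))"
  proof (rule integrable_const_bound[where B="exp (\<bar>c\<bar> * B)"])
    show "AE x in M. norm (exp (c * g x)) \<le> exp (\<bar>c\<bar> * B)"
      using bd by (intro AE_I2) (auto simp: abs_le_iff)
  qed (use g in measurable)
  have lb: "- (\<bar>c\<bar> * B) \<le> c * g x" if "x \<in> space M" for x
    using bd[OF that] unfolding abs_le_iff by linarith
  have "integral\<^sup>L M (\<lambda>x. exp (c * g x)) \<ge> integral\<^sup>L M (\<lambda>x. exp (- (\<bar>c\<bar> * B)))"
    using int lb by (intro integral_mono) auto
  also have "integral\<^sup>L M (\<lambda>x. exp (- (\<bar>c\<bar> * B))) = exp (- (\<bar>c\<bar> * B))" by (simp add: prob_space)
  finally show "integral\<^sup>L M (\<lambda>x. exp (c * g x)) > 0"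
    by (smt (verit) exp_gt_zero)
  show "(\<integral>\<^sup>+x. ennreal (exp (c * g x)) \<partial>M) = ennreal (integral\<^sup>L M (\<lambda>x. exp (c * g x)))"
    using int by (intro nn_integral_eq_integral) auto
qed

lemma dens_exp:
  fixes \<nu> M :: "'a measure" and p g :: "'a \<Rightarrow> real"
  assumes p: "p \<in> borel_measurable \<nu>" "\<forall>x \<in> space \<nu>. 0 \<le> p x" and Md: "M = density \<nu> (\<lambda>x. ennreal (p x))"
    and M: "prob_space M" and g: "g \<in> borel_measurable M" and B: "\<forall>x \<in> space M. \<bar>g x\<bar> \<le> B"
  shows "(\<integral>\<^sup>+x. ennreal (p x * exp (c * g x)) \<partial>\<nu>) = ennreal (integral\<^sup>L M (\<lambda>x. exp (c * g x)))"
proof -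
  have sM: "sets M = sets \<nu>" using Md by simp
  have g': "g \<in> borel_measurable \<nu>" using g sM by (metis measurable_cong_sets)
  have "(\<integral>\<^sup>+x. ennreal (exp (c * g x)) \<partial>M) = (\<integral>\<^sup>+x. ennreal (p x) * ennreal (exp (c * g x)) \<partial>\<nu>)"
    unfolding Md using p g' by (intro nn_integral_density) auto
  also have "\<dots> = (\<integral>\<^sup>+x. ennreal (p x * exp (c * g x)) \<partial>\<nu>)"
    using p by (intro nn_integral_cong) (simp add: ennreal_mult)
  finally show ?thesis using exp_int(3)[OF M g B] by simp
qed

lemma dens_one:
  fixes \<nu> M :: "'a measure" and p :: "'a \<Rightarrow> real"
  assumes p: "p \<in> borel_measurable \<nu>" and Md: "M = density \<nu> (\<lambda>x. ennreal (p x))"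
    and M: "prob_space M"
  shows "(\<integral>\<^sup>+x. ennreal (p x) \<partial>\<nu>) = 1"
proof -
  have "emeasure M (space M) = 1" using M by (simp add: prob_space.emeasure_space_1)
  moreover have "emeasure M (space M) = (\<integral>\<^sup>+x. ennreal (p x) \<partial>\<nu>)"
  proof -
    have "emeasure M (space M) = emeasure (density \<nu> (\<lambda>x. ennreal (p x))) (space \<nu>)" by (simp add: Md)
    also have "\<dots> = (\<integral>\<^sup>+x. ennreal (p x) * indicator (space \<nu>) x \<partial>\<nu>)"
      by (rule emeasure_density) (use p in auto)
    also have "\<dots> = (\<integral>\<^sup>+x. ennreal (p x) \<partial>\<nu>)"
      by (intro nn_integral_cong) (simp add: indicator_def)
    finally show ?thesis .
  qed
  ultimately show ?thesis by simp
qed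




lemma ereal_goal:
  assumes k: "k > 0" and R: "R = \<infinity> \<or> (\<exists>r. R = ereal r \<and> X \<le> Y + k * r)"
  shows "ereal X \<le> ereal Y + ereal k * R"
  using R
proof
  assume "R = \<infinity>" then show ?thesis using k by simp
next
  assume "\<exists>r. R = ereal r \<and> X \<le> Y + k * r"
  then obtain r where "R = ereal r" "X \<le> Y + k * r" by blast
  then show ?thesis by simp
qed

lemma VI_A:
  fixes P Q :: "'a measure" and g :: "'a \<Rightarrow> real" and \<gamma> \<beta> :: real
  assumes P: "prob_space P" and Q: "prob_space Q" and s: "sets Q = sets P"
    and g: "g \<in> borel_measurable P" and B: "\<forall>x \<in> space P. \<bar>g x\<bar> \<le> B"
    and \<gamma>: "\<gamma> > 0" and \<beta>: "\<beta> > \<gamma>"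
  shows "renyi (\<beta>/(\<beta>-\<gamma>)) Q P = \<infinity> \<or> (\<exists>r. renyi (\<beta>/(\<beta>-\<gamma>)) Q P = ereal r \<and>
     cgf_term Q g \<gamma> - cgf_term P g \<gamma> \<le> cgf_term P g \<beta> - cgf_term P g \<gamma> + (1/(\<beta>-\<gamma>)) * r)"
proof -
  define a where "a = \<beta>/(\<beta>-\<gamma>)"
  have bg: "\<beta> - \<gamma> > 0" "\<beta> > 0" using \<gamma> \<beta> by auto
  have a1: "a > 1" unfolding a_def using bg \<gamma> by (simp add: field_simps)
  have am1: "a - 1 = \<gamma>/(\<beta>-\<gamma>)" unfolding a_def using bg by (simp add: field_simps)
  have "a/(a-1) = \<beta>/\<gamma>" unfolding am1 unfolding a_def using bg \<gamma> by (simp add: field_simps)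
  then have ab: "\<gamma> * (a/(a-1)) = \<beta>" using \<gamma> by simp
  have ren: "renyi a Q P = renyi_pos a Q P" unfolding renyi_def using a1 by simp
  obtain \<nu> p q where w: "wit \<nu> p q P Q" and rv: "renyi_pos a Q P =
     (if 1 < a \<and> \<not> absolutely_continuous P Q then \<infinity> else renyi_val a (Iint a \<nu> p q))"
    using renyi_pos_char[OF P Q s] by blast
  have sf: "sigma_finite_measure \<nu>" and sv: "sets \<nu> = sets P" and pm: "p \<in> borel_measurable \<nu>"
    and qm: "q \<in> borel_measurable \<nu>" and nn: "\<forall>x \<in> space \<nu>. 0 \<le> p x \<and> 0 \<le> q x"
    and Pd: "P = density \<nu> (\<lambda>x. ennreal (p x))" and Qd: "Q = density \<nu> (\<lambda>x. ennreal (q x))"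
    using w unfolding wit_def by blast+
  have spv: "space \<nu> = space P" using sets_eq_imp_space_eq[OF sv] .
  have gQ: "g \<in> borel_measurable Q" using g by (simp add: measurable_cong_sets[OF s refl])
  have BQ: "\<forall>x \<in> space Q. \<bar>g x\<bar> \<le> B" using B sets_eq_imp_space_eq[OF s] by simp
  have gv: "g \<in> borel_measurable \<nu>" using g by (simp add: measurable_cong_sets[OF sv refl])
  have aa: "a * (a - 1) > 0" using a1 by simp
  have main: "renyi a Q P = \<infinity> \<or> (\<exists>r. renyi a Q P = ereal r \<and>
     cgf_term Q g \<gamma> - cgf_term P g \<gamma> \<le> cgf_term P g \<beta> - cgf_term P g \<gamma> + (1/(\<beta>-\<gamma>)) * r)"
  proof (cases "absolutely_continuous P Q")
    case False
    then show ?thesis using ren rv a1 by simp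
  next
    case ac: True
    have rv2: "renyi a Q P = renyi_val a (Iint a \<nu> p q)" using ren rv ac by simp
    show ?thesis
    proof (cases "Iint a \<nu> p q = \<top>")
      case True
      then show ?thesis using rv2 aa by (simp add: renyi_val_def)
    next
      case Ifin: False
      then obtain Iv where Iv: "Iint a \<nu> p q = ennreal Iv" "Iv \<ge> 0"
        by (cases "Iint a \<nu> p q") auto
      define EP where "EP = integral\<^sup>L P (\<lambda>x. exp (\<beta> * g x))"
      define EQ where "EQ = integral\<^sup>L Q (\<lambda>x. exp (\<gamma> * g x))"
      have EPpos: "EP > 0" unfolding EP_def using exp_int(2)[OF P g B] .
      have EQpos: "EQ > 0" unfolding EQ_def using exp_int(2)[OF Q gQ BQ] .
      have F: "(\<integral>\<^sup>+x. ennreal (p x * (exp (\<gamma> * g x)) powr (a/(a-1))) \<partial>\<nu>) = ennreal EP"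
      proof -
        have "(\<integral>\<^sup>+x. ennreal (p x * (exp (\<gamma> * g x)) powr (a/(a-1))) \<partial>\<nu>)
            = (\<integral>\<^sup>+x. ennreal (p x * exp (\<beta> * g x)) \<partial>\<nu>)"
          by (intro nn_integral_cong) (simp add: powr_def ab[symmetric] mult.commute mult.left_commute)
        also have "\<dots> = ennreal EP" unfolding EP_def
          using dens_exp[OF pm _ Pd P g B] nn by auto
        finally show ?thesis .
      qed
      have LQ: "(\<integral>\<^sup>+x. ennreal (q x * exp (\<gamma> * g x)) \<partial>\<nu>) = ennreal EQ" unfolding EQ_def
        using dens_exp[OF qm _ Qd Q gQ BQ] nn by auto
      have core: "(\<integral>\<^sup>+x. ennreal (q x * exp (\<gamma> * g x)) \<partial>\<nu>) \<le> ennreal (Iv powr (1/a) * EP powr ((a-1)/a))"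
        by (rule core_gt1[OF a1 pm qm _ _ _ _ ac[unfolded Pd Qd] _ F])
           (use nn Iv EPpos gv in \<open>auto simp: Iint_def Pd Qd\<close>)
      then have le: "EQ \<le> Iv powr (1/a) * EP powr ((a-1)/a)" using LQ EQpos
        by (simp add: ennreal_le_iff)
      have Ivpos: "Iv > 0"
      proof (rule ccontr)
        assume "\<not> Iv > 0" then have "Iv = 0" using Iv by simp
        then show False using le EQpos by simp
      qed
      have lnle: "ln EQ \<le> (1/a) * ln Iv + ((a-1)/a) * ln EP"
      proof -
        have "ln EQ \<le> ln (Iv powr (1/a) * EP powr ((a-1)/a))"
          using le EQpos by (subst ln_le_cancel_iff) auto
        also have "\<dots> = (1/a) * ln Iv + ((a-1)/a) * ln EP"
          using Ivpos EPpos by (simp add: ln_mult ln_powr)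
        finally show ?thesis .
      qed
      have "ln EQ/\<gamma> - ln EP/\<beta> \<le> (1/(\<beta>-\<gamma>)) * (ln Iv / (a * (a - 1)))"
        using alg_A[OF \<gamma> \<beta>, of "ln EQ" "ln Iv" "ln EP"] lnle unfolding a_def by simp
      then have "cgf_term Q g \<gamma> - cgf_term P g \<gamma> \<le> cgf_term P g \<beta> - cgf_term P g \<gamma> + (1/(\<beta>-\<gamma>)) * (ln Iv / (a * (a - 1)))"
        unfolding cgf_term_def EP_def EQ_def by linarith
      moreover have "renyi a Q P = ereal (ln Iv / (a * (a - 1)))"
        using rv2 Iv Ivpos by (simp add: renyi_val_def)
      ultimately show ?thesis by blast
    qed
  qed
  then show ?thesis unfolding a_def .
qed

lemma VI_B:
  fixes P Q :: "'a measure" and g :: "'a \<Rightarrow> real" and \<gamma> \<beta> :: real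
  assumes P: "prob_space P" and Q: "prob_space Q" and s: "sets Q = sets P"
    and g: "g \<in> borel_measurable P" and B: "\<forall>x \<in> space P. \<bar>g x\<bar> \<le> B"
    and \<gamma>: "\<gamma> < 0" and \<beta>: "\<beta> > 0"
  shows "renyi (\<beta>/(\<beta>-\<gamma>)) Q P = \<infinity> \<or> (\<exists>r. renyi (\<beta>/(\<beta>-\<gamma>)) Q P = ereal r \<and>
     cgf_term Q g \<gamma> - cgf_term P g \<gamma> \<le> cgf_term P g \<beta> - cgf_term P g \<gamma> + (1/(\<beta>-\<gamma>)) * r)"
proof -
  define a where "a = \<beta>/(\<beta>-\<gamma>)"
  have bg: "\<beta> - \<gamma> > 0" using \<gamma> \<beta> by auto
  have a01: "0 < a" "a < 1" unfolding a_def using bg \<gamma> \<beta> by (auto simp: field_simps)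
  have am1: "1 - a = -\<gamma>/(\<beta>-\<gamma>)" unfolding a_def using bg by (simp add: field_simps)
  have ab: "a * \<gamma> + (1 - a) * \<beta> = 0" unfolding am1 unfolding a_def using bg by (simp add: field_simps)
  have ren: "renyi a Q P = renyi_pos a Q P" unfolding renyi_def using a01 by simp
  obtain \<nu> p q where w: "wit \<nu> p q P Q" and rv: "renyi_pos a Q P =
     (if 1 < a \<and> \<not> absolutely_continuous P Q then \<infinity> else renyi_val a (Iint a \<nu> p q))"
    using renyi_pos_char[OF P Q s] by blast
  have sf: "sigma_finite_measure \<nu>" and sv: "sets \<nu> = sets P" and pm: "p \<in> borel_measurable \<nu>"
    and qm: "q \<in> borel_measurable \<nu>" and nn: "\<forall>x \<in> space \<nu>. 0 \<le> p x \<and> 0 \<le> q x"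
    and Pd: "P = density \<nu> (\<lambda>x. ennreal (p x))" and Qd: "Q = density \<nu> (\<lambda>x. ennreal (q x))"
    using w unfolding wit_def by blast+
  have gQ: "g \<in> borel_measurable Q" using g by (simp add: measurable_cong_sets[OF s refl])
  have BQ: "\<forall>x \<in> space Q. \<bar>g x\<bar> \<le> B" using B sets_eq_imp_space_eq[OF s] by simp
  have gv: "g \<in> borel_measurable \<nu>" using g by (simp add: measurable_cong_sets[OF sv refl])
  have aa: "a * (a - 1) < 0" using a01 by (simp add: mult_pos_neg)
  have rv2: "renyi a Q P = renyi_val a (Iint a \<nu> p q)" using ren rv a01 by simp
  have P1: "(\<integral>\<^sup>+x. ennreal (p x) \<partial>\<nu>) = 1" using dens_one[OF pm Pd P] .
  have Q1: "(\<integral>\<^sup>+x. ennreal (q x) \<partial>\<nu>) = 1" using dens_one[OF qm Qd Q] .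
  have Q1': "(\<integral>\<^sup>+x. ennreal (q x * 1) \<partial>\<nu>) = ennreal 1" using Q1 by simp
  have P1': "(\<integral>\<^sup>+x. ennreal (p x * 1) \<partial>\<nu>) = ennreal 1" using P1 by simp
  have Ile1: "Iint a \<nu> p q \<le> ennreal (1 powr a * 1 powr (1 - a))"
    unfolding Iint_def
    by (rule core_01[OF a01 pm qm _ _ _ _ _ _ _ Q1' P1']) (use nn in auto)
  have main: "renyi a Q P = \<infinity> \<or> (\<exists>r. renyi a Q P = ereal r \<and>
     cgf_term Q g \<gamma> - cgf_term P g \<gamma> \<le> cgf_term P g \<beta> - cgf_term P g \<gamma> + (1/(\<beta>-\<gamma>)) * r)"
  proof (cases "Iint a \<nu> p q = 0")
    case True
    then show ?thesis using rv2 aa by (simp add: renyi_val_def)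
  next
    case I0: False
    have Ifin: "Iint a \<nu> p q \<noteq> \<top>" using Ile1 by (auto simp: top_unique)
    then obtain Iv where Iv: "Iint a \<nu> p q = ennreal Iv" "Iv \<ge> 0"
      by (cases "Iint a \<nu> p q") auto
    have Ivpos: "Iv > 0" using Iv I0 by (auto simp: less_le)
    define EP where "EP = integral\<^sup>L P (\<lambda>x. exp (\<beta> * g x))"
    define EQ where "EQ = integral\<^sup>L Q (\<lambda>x. exp (\<gamma> * g x))"
    have EPpos: "EP > 0" unfolding EP_def using exp_int(2)[OF P g B] .
    have EQpos: "EQ > 0" unfolding EQ_def using exp_int(2)[OF Q gQ BQ] .
    have F2: "(\<integral>\<^sup>+x. ennreal (p x * exp (\<beta> * g x)) \<partial>\<nu>) = ennreal EP" unfolding EP_def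
      using dens_exp[OF pm _ Pd P g B] nn by auto
    have F1: "(\<integral>\<^sup>+x. ennreal (q x * exp (\<gamma> * g x)) \<partial>\<nu>) = ennreal EQ" unfolding EQ_def
      using dens_exp[OF qm _ Qd Q gQ BQ] nn by auto
    have ff: "exp (\<gamma> * g x) powr a * exp (\<beta> * g x) powr (1 - a) = 1" for x
    proof -
      have "exp (\<gamma> * g x) powr a * exp (\<beta> * g x) powr (1 - a) = exp ((a * \<gamma> + (1 - a) * \<beta>) * g x)"
        by (simp add: powr_def exp_add[symmetric] algebra_simps)
      then show ?thesis using ab by simp
    qed
    have core: "Iint a \<nu> p q \<le> ennreal (EQ powr a * EP powr (1 - a))"
      unfolding Iint_def
      by (rule core_01[OF a01 pm qm _ _ _ _ _ _ _ F1 F2]) (use nn gv ff EPpos EQpos in auto)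
    then have le: "Iv \<le> EQ powr a * EP powr (1 - a)" using Iv EPpos EQpos
      by (simp add: ennreal_le_iff)
    have lnle: "ln Iv \<le> a * ln EQ + (1 - a) * ln EP"
    proof -
      have "ln Iv \<le> ln (EQ powr a * EP powr (1 - a))"
        using le Ivpos by (subst ln_le_cancel_iff) auto
      also have "\<dots> = a * ln EQ + (1 - a) * ln EP"
        using EQpos EPpos by (simp add: ln_mult ln_powr)
      finally show ?thesis .
    qed
    have "ln EQ/\<gamma> - ln EP/\<beta> \<le> (1/(\<beta>-\<gamma>)) * (ln Iv / (a * (a - 1)))"
      using alg_B[OF \<gamma> \<beta>, of "ln Iv" "ln EQ" "ln EP"] lnle unfolding a_def by simp
    then have "cgf_term Q g \<gamma> - cgf_term P g \<gamma> \<le> cgf_term P g \<beta> - cgf_term P g \<gamma> + (1/(\<beta>-\<gamma>)) * (ln Iv / (a * (a - 1)))"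
      unfolding cgf_term_def EP_def EQ_def by linarith
    moreover have "renyi a Q P = ereal (ln Iv / (a * (a - 1)))"
      using rv2 Iv Ivpos by (simp add: renyi_val_def)
    ultimately show ?thesis by blast
  qed
  then show ?thesis unfolding a_def .
qed

lemma VI_C:
  fixes P Q :: "'a measure" and g :: "'a \<Rightarrow> real" and \<gamma> \<beta> :: real
  assumes P: "prob_space P" and Q: "prob_space Q" and s: "sets Q = sets P"
    and g: "g \<in> borel_measurable P" and B: "\<forall>x \<in> space P. \<bar>g x\<bar> \<le> B"
    and \<gamma>\<beta>: "\<gamma> < \<beta>" and \<beta>: "\<beta> < 0"
  shows "renyi (\<beta>/(\<beta>-\<gamma>)) Q P = \<infinity> \<or> (\<exists>r. renyi (\<beta>/(\<beta>-\<gamma>)) Q P = ereal r \<and>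
     cgf_term Q g \<gamma> - cgf_term P g \<gamma> \<le> cgf_term P g \<beta> - cgf_term P g \<gamma> + (1/(\<beta>-\<gamma>)) * r)"
proof -
  define a0 where "a0 = \<beta>/(\<beta>-\<gamma>)"
  define a where "a = 1 - a0"
  have bg: "\<beta> - \<gamma> > 0" "\<gamma> < 0" using \<gamma>\<beta> \<beta> by auto
  have a0n: "a0 < 0" unfolding a0_def using bg \<beta> by (simp add: divide_neg_pos)
  have a1: "a > 1" unfolding a_def using a0n by simp
  have ae: "a = -\<gamma>/(\<beta>-\<gamma>)" unfolding a_def a0_def using bg by (simp add: field_simps)
  have am1: "a - 1 = -\<beta>/(\<beta>-\<gamma>)" unfolding a_def a0_def using bg by (simp add: field_simps)
  have "a/(a-1) = \<gamma>/\<beta>" unfolding am1 unfolding ae using bg \<beta> by (simp add: field_simps)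
  then have ab: "\<beta> * (a/(a-1)) = \<gamma>" using \<beta> by simp
  have s': "sets P = sets Q" using s by simp
  have ren: "renyi a0 Q P = renyi_pos a P Q" unfolding renyi_def a_def using a0n by simp
  obtain \<nu> p q where w: "wit \<nu> p q Q P" and rv: "renyi_pos a P Q =
     (if 1 < a \<and> \<not> absolutely_continuous Q P then \<infinity> else renyi_val a (Iint a \<nu> p q))"
    using renyi_pos_char[OF Q P s'] by blast
  have sf: "sigma_finite_measure \<nu>" and sv: "sets \<nu> = sets Q" and pm: "p \<in> borel_measurable \<nu>"
    and qm: "q \<in> borel_measurable \<nu>" and nn: "\<forall>x \<in> space \<nu>. 0 \<le> p x \<and> 0 \<le> q x"
    and Qd: "Q = density \<nu> (\<lambda>x. ennreal (p x))" and Pd: "P = density \<nu> (\<lambda>x. ennreal (q x))"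
    using w unfolding wit_def by blast+
  have gQ: "g \<in> borel_measurable Q" using g by (simp add: measurable_cong_sets[OF s refl])
  have BQ: "\<forall>x \<in> space Q. \<bar>g x\<bar> \<le> B" using B sets_eq_imp_space_eq[OF s] by simp
  have gv: "g \<in> borel_measurable \<nu>" using gQ by (simp add: measurable_cong_sets[OF sv refl])
  have aa: "a * (a - 1) > 0" using a1 by simp
  have main: "renyi a0 Q P = \<infinity> \<or> (\<exists>r. renyi a0 Q P = ereal r \<and>
     cgf_term Q g \<gamma> - cgf_term P g \<gamma> \<le> cgf_term P g \<beta> - cgf_term P g \<gamma> + (1/(\<beta>-\<gamma>)) * r)"
  proof (cases "absolutely_continuous Q P")
    case False
    then show ?thesis using ren rv a1 by simp
  next
    case ac: True
    have rv2: "renyi a0 Q P = renyi_val a (Iint a \<nu> p q)" using ren rv ac by simp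
    show ?thesis
    proof (cases "Iint a \<nu> p q = \<top>")
      case True
      then show ?thesis using rv2 aa by (simp add: renyi_val_def)
    next
      case Ifin: False
      then obtain Iv where Iv: "Iint a \<nu> p q = ennreal Iv" "Iv \<ge> 0"
        by (cases "Iint a \<nu> p q") auto
      define EP where "EP = integral\<^sup>L P (\<lambda>x. exp (\<beta> * g x))"
      define EQ where "EQ = integral\<^sup>L Q (\<lambda>x. exp (\<gamma> * g x))"
      have EPpos: "EP > 0" unfolding EP_def using exp_int(2)[OF P g B] .
      have EQpos: "EQ > 0" unfolding EQ_def using exp_int(2)[OF Q gQ BQ] .
      have F: "(\<integral>\<^sup>+x. ennreal (p x * (exp (\<beta> * g x)) powr (a/(a-1))) \<partial>\<nu>) = ennreal EQ"
      proof -
        have "(\<integral>\<^sup>+x. ennreal (p x * (exp (\<beta> * g x)) powr (a/(a-1))) \<partial>\<nu>)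
            = (\<integral>\<^sup>+x. ennreal (p x * exp (\<gamma> * g x)) \<partial>\<nu>)"
        proof (intro nn_integral_cong)
          fix x
          have e: "a/(a-1) * (\<beta> * g x) = \<gamma> * g x" using ab by (metis mult.assoc mult.commute)
          have "(exp (\<beta> * g x)) powr (a/(a-1)) = exp (a/(a-1) * (\<beta> * g x))"
            by (simp add: powr_def)
          also have "\<dots> = exp (\<gamma> * g x)" by (simp only: e)
          finally show "ennreal (p x * (exp (\<beta> * g x)) powr (a/(a-1))) = ennreal (p x * exp (\<gamma> * g x))"
            by simp
        qed
        also have "\<dots> = ennreal EQ" unfolding EQ_def
          using dens_exp[OF pm _ Qd Q gQ BQ] nn by auto
        finally show ?thesis .
      qed
      have LP: "(\<integral>\<^sup>+x. ennreal (q x * exp (\<beta> * g x)) \<partial>\<nu>) = ennreal EP" unfolding EP_def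
        using dens_exp[OF qm _ Pd P g B] nn by auto
      have core: "(\<integral>\<^sup>+x. ennreal (q x * exp (\<beta> * g x)) \<partial>\<nu>) \<le> ennreal (Iv powr (1/a) * EQ powr ((a-1)/a))"
        by (rule core_gt1[OF a1 pm qm _ _ _ _ ac[unfolded Pd Qd] _ F])
           (use nn Iv EQpos gv in \<open>auto simp: Iint_def Pd Qd\<close>)
      then have le: "EP \<le> Iv powr (1/a) * EQ powr ((a-1)/a)" using LP EPpos
        by (simp add: ennreal_le_iff)
      have Ivpos: "Iv > 0"
      proof (rule ccontr)
        assume "\<not> Iv > 0" then have "Iv = 0" using Iv by simp
        then show False using le EPpos by simp
      qed
      have lnle: "ln EP \<le> (1/a) * ln Iv + ((a-1)/a) * ln EQ"
      proof -
        have "ln EP \<le> ln (Iv powr (1/a) * EQ powr ((a-1)/a))"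
          using le EPpos by (subst ln_le_cancel_iff) auto
        also have "\<dots> = (1/a) * ln Iv + ((a-1)/a) * ln EQ"
          using Ivpos EQpos by (simp add: ln_mult ln_powr)
        finally show ?thesis .
      qed
      have "ln EQ/\<gamma> - ln EP/\<beta> \<le> (1/(\<beta>-\<gamma>)) * (ln Iv / (a * (a - 1)))"
        using alg_C[OF \<gamma>\<beta> \<beta>, of "ln EP" "ln Iv" "ln EQ"] lnle unfolding a_def a0_def by simp
      then have "cgf_term Q g \<gamma> - cgf_term P g \<gamma> \<le> cgf_term P g \<beta> - cgf_term P g \<gamma> + (1/(\<beta>-\<gamma>)) * (ln Iv / (a * (a - 1)))"
        unfolding cgf_term_def EP_def EQ_def by linarith
      moreover have "renyi a0 Q P = ereal (ln Iv / (a * (a - 1)))"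
        using rv2 Iv Ivpos by (simp add: renyi_val_def)
      ultimately show ?thesis by blast
    qed
  qed
  then show ?thesis unfolding a0_def .
qed




lemma VI_all:
  fixes P Q :: "'a measure" and g :: "'a \<Rightarrow> real" and \<gamma> \<beta> :: real
  assumes P: "prob_space P" and Q: "prob_space Q" and s: "sets Q = sets P"
    and g: "g \<in> borel_measurable P" and B: "\<forall>x \<in> space P. \<bar>g x\<bar> \<le> B"
    and \<gamma>: "\<gamma> \<noteq> 0" and \<beta>: "\<beta> > \<gamma>" "\<beta> \<noteq> 0"
  shows "renyi (\<beta>/(\<beta>-\<gamma>)) Q P = \<infinity> \<or> (\<exists>r. renyi (\<beta>/(\<beta>-\<gamma>)) Q P = ereal r \<and>
     cgf_term Q g \<gamma> - cgf_term P g \<gamma> \<le> cgf_term P g \<beta> - cgf_term P g \<gamma> + (1/(\<beta>-\<gamma>)) * r)"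
proof -
  consider "\<gamma> > 0" | "\<gamma> < 0" "\<beta> > 0" | "\<gamma> < 0" "\<beta> < 0" using \<gamma> \<beta> by linarith
  then show ?thesis
  proof cases
    case 1 then show ?thesis using VI_A[OF P Q s g B 1 \<beta>(1)] by blast
  next
    case 2 then show ?thesis using VI_B[OF P Q s g B] by blast
  next
    case 3 then show ?thesis using VI_C[OF P Q s g B \<beta>(1)] by blast
  qed
qed

lemma cgf_zero:
  assumes "prob_space M"
  shows "cgf_term M (\<lambda>x. 0) c = 0"
  using assms by (simp add: cgf_term_def prob_space.prob_space)

lemma renyi_pos_PP:
  assumes P: "prob_space P"
  shows "renyi_pos b P P = 0"
proof -
  obtain \<nu> p q where w: "wit \<nu> p q P P" and rv: "renyi_pos b P P =
     (if 1 < b \<and> \<not> absolutely_continuous P P then \<infinity> else renyi_val b (Iint b \<nu> p q))"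
    using renyi_pos_char[OF P P refl] by blast
  have sf: "sigma_finite_measure \<nu>" and pm: "p \<in> borel_measurable \<nu>"
    and qm: "q \<in> borel_measurable \<nu>" and nn: "\<forall>x \<in> space \<nu>. 0 \<le> p x \<and> 0 \<le> q x"
    and Pd: "P = density \<nu> (\<lambda>x. ennreal (p x))" and Qd: "P = density \<nu> (\<lambda>x. ennreal (q x))"
    using w unfolding wit_def by blast+
  have ac: "absolutely_continuous P P" unfolding absolutely_continuous_def by simp
  have "AE x in \<nu>. ennreal (p x) = ennreal (q x)"
    using sigma_finite_measure.density_unique[OF sf _ _ trans[OF Pd[symmetric] Qd]] pm qm by auto
  then have AEpq: "AE x in \<nu>. p x = q x"
    using AE_space by eventually_elim (use nn in auto)
  have "Iint b \<nu> p q = (\<integral>\<^sup>+x. ennreal (p x) \<partial>\<nu>)"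
    unfolding Iint_def
  proof (rule nn_integral_cong_AE)
    show "AE x in \<nu>. ennreal (indicator {y. 0 < p y} x * q x powr b * p x powr (1 - b)) = ennreal (p x)"
      using AEpq AE_space
    proof eventually_elim
      case (elim x)
      show ?case
      proof (cases "p x > 0")
        case True
        then have "q x powr b * p x powr (1 - b) = p x" using elim by (simp add: powr_add[symmetric])
        then show ?thesis using True by simp
      next
        case False
        then have "p x = 0" using elim nn by force
        then show ?thesis by simp
      qed
    qed
  qed
  also have "\<dots> = 1" using dens_one[OF pm Pd P] .
  finally show ?thesis using rv ac by (simp add: renyi_val_def)
qed

lemma renyi_PP:
  assumes P: "prob_space P"
  shows "renyi a P P = 0"
  unfolding renyi_def using renyi_pos_PP[OF P] by simp


lemma renyi_pos_swap:
  assumes a: "0 < a" "a < 1"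
  shows "renyi_pos a Q P = renyi_pos (1 - a) P Q"
proof -
  have "\<And>r. (\<exists>\<nu> p q. sigma_finite_measure \<nu> \<and> sets \<nu> = sets P \<and>
        p \<in> borel_measurable \<nu> \<and> q \<in> borel_measurable \<nu> \<and>
        (\<forall>x \<in> space \<nu>. 0 \<le> p x \<and> 0 \<le> q x) \<and>
        P = density \<nu> (\<lambda>x. ennreal (p x)) \<and> Q = density \<nu> (\<lambda>x. ennreal (q x)) \<and>
        r = (if 1 < a \<and> \<not> absolutely_continuous P Q then \<infinity>
             else renyi_val a
               (\<integral>\<^sup>+ x. ennreal (indicator {y. 0 < p y} x * (q x powr a) * (p x powr (1 - a))) \<partial>\<nu>)))
    \<longleftrightarrow> (\<exists>\<nu> p q. sigma_finite_measure \<nu> \<and> sets \<nu> = sets Q \<and>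
        p \<in> borel_measurable \<nu> \<and> q \<in> borel_measurable \<nu> \<and>
        (\<forall>x \<in> space \<nu>. 0 \<le> p x \<and> 0 \<le> q x) \<and>
        Q = density \<nu> (\<lambda>x. ennreal (p x)) \<and> P = density \<nu> (\<lambda>x. ennreal (q x)) \<and>
        r = (if 1 < 1 - a \<and> \<not> absolutely_continuous Q P then \<infinity>
             else renyi_val (1 - a)
               (\<integral>\<^sup>+ x. ennreal (indicator {y. 0 < p y} x * (q x powr (1 - a)) * (p x powr (1 - (1 - a)))) \<partial>\<nu>)))"
    (is "\<And>r. ?L r \<longleftrightarrow> ?R r")
  proof -
    fix r
    have key: "\<And>\<nu> (p::'a \<Rightarrow> real) q. (\<forall>x \<in> space \<nu>. 0 \<le> p x \<and> 0 \<le> q x) \<Longrightarrow>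
        (\<integral>\<^sup>+ x. ennreal (indicator {y. 0 < p y} x * (q x powr a) * (p x powr (1 - a))) \<partial>\<nu>) =
        (\<integral>\<^sup>+ x. ennreal (indicator {y. 0 < q y} x * (p x powr (1 - a)) * (q x powr (1 - (1 - a)))) \<partial>\<nu>)"
      by (intro nn_integral_cong) (auto simp: indicator_def)
    have rv: "\<And>I. renyi_val a I = renyi_val (1 - a) I"
      unfolding renyi_val_def by (simp add: algebra_simps)
    show "?L r \<longleftrightarrow> ?R r"
    proof
      assume "?L r"
      then obtain \<nu> p q where h: "sigma_finite_measure \<nu> \<and> sets \<nu> = sets P \<and>
        p \<in> borel_measurable \<nu> \<and> q \<in> borel_measurable \<nu> \<and>
        (\<forall>x \<in> space \<nu>. 0 \<le> p x \<and> 0 \<le> q x) \<and>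
        P = density \<nu> (\<lambda>x. ennreal (p x)) \<and> Q = density \<nu> (\<lambda>x. ennreal (q x)) \<and>
        r = (if 1 < a \<and> \<not> absolutely_continuous P Q then \<infinity>
             else renyi_val a
               (\<integral>\<^sup>+ x. ennreal (indicator {y. 0 < p y} x * (q x powr a) * (p x powr (1 - a))) \<partial>\<nu>))" by blast
      from h have h1: "sigma_finite_measure \<nu>" and h3: "p \<in> borel_measurable \<nu>" and h4: "q \<in> borel_measurable \<nu>"
        and h5: "\<forall>x \<in> space \<nu>. 0 \<le> p x \<and> 0 \<le> q x" and h7: "Q = density \<nu> (\<lambda>x. ennreal (q x))"
        and h6: "P = density \<nu> (\<lambda>x. ennreal (p x))"
        and h8: "r = (if 1 < a \<and> \<not> absolutely_continuous P Q then \<infinity>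
             else renyi_val a
               (\<integral>\<^sup>+ x. ennreal (indicator {y. 0 < p y} x * (q x powr a) * (p x powr (1 - a))) \<partial>\<nu>))"
        by blast+
      have sQ: "sets \<nu> = sets Q" by (subst h7) simp
      have r': "r = (if 1 < 1 - a \<and> \<not> absolutely_continuous Q P then \<infinity>
             else renyi_val (1 - a)
               (\<integral>\<^sup>+ x. ennreal (indicator {y. 0 < q y} x * (p x powr (1 - a)) * (q x powr (1 - (1 - a)))) \<partial>\<nu>))"
        using h8 a by (simp only: key[OF h5] rv[symmetric]) simp
      show "?R r"
        by (rule exI[of _ \<nu>], rule exI[of _ q], rule exI[of _ p]) (use h1 sQ h3 h4 h5 h7 h6 r' in blast)
    next
      assume "?R r"
      then obtain \<nu> p q where h: "sigma_finite_measure \<nu> \<and> sets \<nu> = sets Q \<and>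
        p \<in> borel_measurable \<nu> \<and> q \<in> borel_measurable \<nu> \<and>
        (\<forall>x \<in> space \<nu>. 0 \<le> p x \<and> 0 \<le> q x) \<and>
        Q = density \<nu> (\<lambda>x. ennreal (p x)) \<and> P = density \<nu> (\<lambda>x. ennreal (q x)) \<and>
        r = (if 1 < 1 - a \<and> \<not> absolutely_continuous Q P then \<infinity>
             else renyi_val (1 - a)
               (\<integral>\<^sup>+ x. ennreal (indicator {y. 0 < p y} x * (q x powr (1 - a)) * (p x powr (1 - (1 - a)))) \<partial>\<nu>))" by blast
      from h have h1: "sigma_finite_measure \<nu>" and h3: "p \<in> borel_measurable \<nu>" and h4: "q \<in> borel_measurable \<nu>"
        and h5: "\<forall>x \<in> space \<nu>. 0 \<le> p x \<and> 0 \<le> q x" and h7: "Q = density \<nu> (\<lambda>x. ennreal (p x))"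
        and h6: "P = density \<nu> (\<lambda>x. ennreal (q x))"
        and h8: "r = (if 1 < 1 - a \<and> \<not> absolutely_continuous Q P then \<infinity>
             else renyi_val (1 - a)
               (\<integral>\<^sup>+ x. ennreal (indicator {y. 0 < p y} x * (q x powr (1 - a)) * (p x powr (1 - (1 - a)))) \<partial>\<nu>))"
        by blast+
      have h5': "\<forall>x \<in> space \<nu>. 0 \<le> q x \<and> 0 \<le> p x" using h5 by blast
      have sP: "sets \<nu> = sets P" by (subst h6) simp
      have r': "r = (if 1 < a \<and> \<not> absolutely_continuous P Q then \<infinity>
             else renyi_val a
               (\<integral>\<^sup>+ x. ennreal (indicator {y. 0 < q y} x * (p x powr a) * (q x powr (1 - a))) \<partial>\<nu>))"
        using h8 a by (simp only: key[OF h5'] rv[symmetric]) simp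
      show "?L r"
        by (rule exI[of _ \<nu>], rule exI[of _ q], rule exI[of _ p]) (use h1 sP h3 h4 h5' h7 h6 r' in blast)
    qed
  qed
  then show ?thesis unfolding renyi_pos_def by (intro arg_cong[where f=Eps] ext) blast
qed

lemma renyi_swap:
  assumes "a \<noteq> 0" "a \<noteq> 1"
  shows "renyi a Q P = renyi (1 - a) P Q"
proof -
  consider "a < 0" | "0 < a" "a < 1" | "a > 1" using assms by linarith
  then show ?thesis
  proof cases
    case 1 then show ?thesis unfolding renyi_def by simp
  next
    case 2 then show ?thesis unfolding renyi_def using renyi_pos_swap[OF 2] by simp
  next
    case 3 then show ?thesis unfolding renyi_def by simp
  qed
qed




lemma cgf_neg: "cgf_term M (\<lambda>x. - g x) (- c) = - cgf_term M g c"
  by (simp add: cgf_term_def)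

lemma ereal_neg_plus: "- (ereal x + y) = ereal (- x) - (y::ereal)"
  by (cases y) auto

lemma ident:
  fixes \<gamma> :: real
  assumes \<gamma>: "\<gamma> \<noteq> 0"
  shows "Xi_minus \<gamma> Q P g = - Xi_plus (- \<gamma>) Q P (\<lambda>x. - g x)"
proof -
  define S where "S = {\<beta>::real. \<beta> < \<gamma> \<and> \<beta> \<noteq> 0}"
  define F where "F = (\<lambda>\<beta>. ereal (cgf_term P (\<lambda>x. - g x) \<beta> - cgf_term P (\<lambda>x. - g x) (- \<gamma>))
        + ereal (1 / (\<beta> - - \<gamma>)) * renyi (\<beta> / (\<beta> - - \<gamma>)) Q P)"
  have img: "{\<beta>. \<beta> > - \<gamma> \<and> \<beta> \<noteq> 0} = uminus ` S"
    unfolding S_def by (auto intro: image_eqI[where x="- _"])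
  have "Xi_plus (- \<gamma>) Q P (\<lambda>x. - g x) = (INF \<beta>\<in>uminus ` S. F \<beta>)"
    unfolding Xi_plus_def F_def img ..
  also have "\<dots> = (INF \<beta>\<in>S. F (- \<beta>))" by (simp add: image_comp)
  finally have "- Xi_plus (- \<gamma>) Q P (\<lambda>x. - g x) = (SUP \<beta>\<in>S. - F (- \<beta>))"
    by (simp add: ereal_SUP_uminus_eq)
  also have "\<dots> = Xi_minus \<gamma> Q P g"
    unfolding Xi_minus_def S_def[symmetric]
  proof (rule SUP_cong[OF refl])
    fix \<beta> assume b: "\<beta> \<in> S"
    then have b1: "\<beta> < \<gamma>" "\<beta> \<noteq> 0" unfolding S_def by auto
    have e1: "- \<beta> - - \<gamma> = \<gamma> - \<beta>" by simp
    have e2: "1 - (- \<beta> / (\<gamma> - \<beta>)) = \<gamma> / (\<gamma> - \<beta>)" using b1 by (simp add: field_simps)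
    have rs: "renyi (- \<beta> / (\<gamma> - \<beta>)) Q P = renyi (\<gamma> / (\<gamma> - \<beta>)) P Q"
      using renyi_swap[of "- \<beta> / (\<gamma> - \<beta>)" Q P] b1 \<gamma> e2 by (auto simp: field_simps)
    show "- F (- \<beta>) = ereal (cgf_term P g \<beta> - cgf_term P g \<gamma>) - ereal (1 / (\<gamma> - \<beta>)) * renyi (\<gamma> / (\<gamma> - \<beta>)) P Q"
      unfolding F_def e1 rs cgf_neg ereal_neg_plus
      using cgf_neg[of P g \<beta>] by simp
  qed
  finally show ?thesis ..
qed



lemma sign_powr:
  fixes z e :: real
  assumes z: "z > 0" "z \<noteq> 1" and e: "e \<noteq> 0"
  shows "e * (z powr e - 1) * (z - 1) > 0"
proof -
  have zp: "z powr e = exp (e * ln z)" using z by (simp add: powr_def)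
  have lnz: "ln z \<noteq> 0" using z by simp
  have sl: "ln z * (z - 1) > 0"
  proof (cases "z > 1")
    case True then show ?thesis by (simp add: mult_pos_pos)
  next
    case False then have "z < 1" using z by simp
    then show ?thesis using z by (simp add: mult_neg_neg)
  qed
  have su: "(exp u - 1) * u > 0" if "u \<noteq> 0" for u :: real
  proof (cases "u > 0")
    case True then show ?thesis by (simp add: mult_pos_pos)
  next
    case False then have "u < 0" using that by simp
    then show ?thesis by (simp add: mult_neg_neg)
  qed
  have "(exp (e * ln z) - 1) * (e * ln z) > 0" using su e lnz by simp
  then have "(exp (e * ln z) - 1) * (e * ln z) * (ln z * (z - 1)) > 0" using sl by (simp add: mult_pos_pos)
  then have "(e * (exp (e * ln z) - 1) * (z - 1)) * (ln z * ln z) > 0" by (simp add: algebra_simps)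
  then show ?thesis unfolding zp using lnz
    by (metis mult_less_0_iff not_square_less_zero order_less_asym' zero_less_mult_iff)
qed

lemma tangent:
  fixes t r :: real
  assumes t: "t > 0" "t \<noteq> 1" and r: "r \<noteq> 0" "r \<noteq> 1"
  shows "r * (r - 1) * (t powr r - 1 - r * (t - 1)) > 0"
proof -
  define f where "f = (\<lambda>s::real. s powr r - 1 - r * (s - 1))"
  define f' where "f' = (\<lambda>s::real. r * s powr (r - 1) - r)"
  have der: "DERIV f s :> f' s" if "s > 0" for s
    unfolding f_def f'_def using that
    by (auto intro!: derivative_eq_intros has_real_derivative_powr)
  have f1: "f 1 = 0" unfolding f_def by simp
  have key: "r * (r - 1) * ((t - 1) * f' z) > 0" if z: "z > 0" "z \<noteq> 1" "(z - 1) * (t - 1) > 0" for z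
  proof -
    have "(r - 1) * (z powr (r - 1) - 1) * (z - 1) > 0" using sign_powr[OF z(1,2)] r by simp
    then have "(r - 1) * (z powr (r - 1) - 1) * (z - 1) * ((z - 1) * (t - 1)) > 0"
      using z(3) by (simp add: mult_pos_pos)
    then have "(r * r) * ((r - 1) * (z powr (r - 1) - 1) * (z - 1) * ((z - 1) * (t - 1))) > 0"
    proof -
      have rr: "r * r > 0" using r(1) by (auto simp: zero_less_mult_iff linorder_neq_iff)
      show ?thesis using rr \<open>0 < (r - 1) * (z powr (r - 1) - 1) * (z - 1) * ((z - 1) * (t - 1))\<close> by (rule mult_pos_pos)
    qed
    moreover have "(r * r) * ((r - 1) * (z powr (r - 1) - 1) * (z - 1) * ((z - 1) * (t - 1)))
        = (r * (r - 1) * ((t - 1) * f' z)) * ((z - 1) * (z - 1))"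
      unfolding f'_def by (simp add: algebra_simps)
    ultimately show ?thesis using z
      by (metis mult_less_0_iff not_square_less_zero order_less_asym' zero_less_mult_iff)
  qed
  show ?thesis
  proof (cases "t > 1")
    case True
    obtain z where z: "1 < z" "z < t" "f t - f 1 = (t - 1) * f' z"
      using MVT2[of 1 t f f'] True der by force
    have "r * (r - 1) * ((t - 1) * f' z) > 0" using key[of z] z True by (simp add: mult_pos_pos)
    then show ?thesis using z f1 unfolding f_def by simp
  next
    case False then have t1: "t < 1" using t by simp
    obtain z where z: "t < z" "z < 1" "f 1 - f t = (1 - t) * f' z"
      using MVT2[of t 1 f f'] t1 t der by force
    have "r * (r - 1) * ((t - 1) * f' z) > 0" using key[of z] z t1 t by (simp add: mult_neg_neg)
    moreover have "f t = (t - 1) * f' z" using z f1 by (simp add: algebra_simps)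
    ultimately show ?thesis unfolding f_def by simp
  qed
qed

lemma exp_minus_one_bound: "\<bar>exp t - 1\<bar> \<le> exp \<bar>t\<bar> - (1::real)"
proof (cases "t \<ge> 0")
  case True
  then have "exp t \<ge> 1" using exp_ge_add_one_self[of t] by linarith
  then show ?thesis using True by (simp add: abs_of_nonneg)
next
  case False
  then have "exp t \<le> 1" by simp
  moreover have "exp t + exp (- t) \<ge> 2"
  proof -
    have "exp t * exp (-t) = 1" by (simp add: exp_minus_inverse)
    moreover have "(exp t - 1) * (exp (- t) - 1) \<le> 0"
      using False by (intro mult_nonpos_nonneg) auto
    ultimately show ?thesis by (simp add: algebra_simps)
  qed
  ultimately show ?thesis using False by simp
qed

lemma pt_bound:
  fixes c \<gamma> y B :: real
  assumes "\<bar>y\<bar> \<le> B"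
  shows "\<bar>exp (c * y) - exp (\<gamma> * y)\<bar> \<le> exp (\<bar>\<gamma>\<bar> * B) * (exp (\<bar>c - \<gamma>\<bar> * B) - 1)"
proof -
  have B0: "B \<ge> 0" using assms by linarith
  have "exp (c * y) - exp (\<gamma> * y) = exp (\<gamma> * y) * (exp ((c - \<gamma>) * y) - 1)"
    by (simp add: algebra_simps exp_add[symmetric])
  then have "\<bar>exp (c * y) - exp (\<gamma> * y)\<bar> = exp (\<gamma> * y) * \<bar>exp ((c - \<gamma>) * y) - 1\<bar>"
    by (simp add: abs_mult)
  also have "\<dots> \<le> exp (\<bar>\<gamma>\<bar> * B) * (exp (\<bar>c - \<gamma>\<bar> * B) - 1)"
  proof (rule mult_mono)
    have "\<gamma> * y \<le> \<bar>\<gamma>\<bar> * B"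
      using assms abs_mult[of \<gamma> y] mult_left_mono[of "\<bar>y\<bar>" B "\<bar>\<gamma>\<bar>"] by (smt (verit) abs_ge_self)
    then show "exp (\<gamma> * y) \<le> exp (\<bar>\<gamma>\<bar> * B)" by simp
    have "\<bar>(c - \<gamma>) * y\<bar> \<le> \<bar>c - \<gamma>\<bar> * B"
      using assms by (simp add: abs_mult mult_left_mono)
    then show "\<bar>exp ((c - \<gamma>) * y) - 1\<bar> \<le> exp (\<bar>c - \<gamma>\<bar> * B) - 1"
      using exp_minus_one_bound[of "(c - \<gamma>) * y"] by (smt (verit) exp_le_cancel_iff)
  qed auto
  finally show ?thesis .
qed

lemma E_cont:
  fixes M :: "'a measure" and f :: "'a \<Rightarrow> real"
  assumes M: "prob_space M" and f: "f \<in> borel_measurable M" and B: "\<forall>x \<in> space M. \<bar>f x\<bar> \<le> B"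
  shows "((\<lambda>c. integral\<^sup>L M (\<lambda>x. exp (c * f x))) \<longlongrightarrow> integral\<^sup>L M (\<lambda>x. exp (\<gamma> * f x))) (at \<gamma>)"
proof (rule LIM_zero_cancel, rule Lim_null_comparison)
  interpret prob_space M by fact
  show "\<forall>\<^sub>F c in at \<gamma>. norm (integral\<^sup>L M (\<lambda>x. exp (c * f x)) - integral\<^sup>L M (\<lambda>x. exp (\<gamma> * f x)))
      \<le> exp (\<bar>\<gamma>\<bar> * B) * (exp (\<bar>c - \<gamma>\<bar> * B) - 1)"
  proof (rule always_eventually, rule allI)
    fix c
    have "integral\<^sup>L M (\<lambda>x. exp (c * f x)) - integral\<^sup>L M (\<lambda>x. exp (\<gamma> * f x))
        = integral\<^sup>L M (\<lambda>x. exp (c * f x) - exp (\<gamma> * f x))"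
      using exp_int(1)[OF M f B] by (simp add: Bochner_Integration.integral_diff)
    then have "norm (integral\<^sup>L M (\<lambda>x. exp (c * f x)) - integral\<^sup>L M (\<lambda>x. exp (\<gamma> * f x)))
        \<le> integral\<^sup>L M (\<lambda>x. norm (exp (c * f x) - exp (\<gamma> * f x)))"
      by (simp only: integral_norm_bound)
    also have "\<dots> \<le> integral\<^sup>L M (\<lambda>x. exp (\<bar>\<gamma>\<bar> * B) * (exp (\<bar>c - \<gamma>\<bar> * B) - 1))"
      using B exp_int(1)[OF M f B] pt_bound
      by (intro integral_mono) (auto intro!: Bochner_Integration.integrable_diff)
    also have "\<dots> = exp (\<bar>\<gamma>\<bar> * B) * (exp (\<bar>c - \<gamma>\<bar> * B) - 1)" by (simp add: prob_space)
    finally show "norm (integral\<^sup>L M (\<lambda>x. exp (c * f x)) - integral\<^sup>L M (\<lambda>x. exp (\<gamma> * f x)))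
      \<le> exp (\<bar>\<gamma>\<bar> * B) * (exp (\<bar>c - \<gamma>\<bar> * B) - 1)" .
  qed
  have "((\<lambda>c. exp (\<bar>\<gamma>\<bar> * B) * (exp (\<bar>c - \<gamma>\<bar> * B) - 1)) \<longlongrightarrow> exp (\<bar>\<gamma>\<bar> * B) * (exp (\<bar>\<gamma> - \<gamma>\<bar> * B) - 1)) (at \<gamma>)"
    by (intro tendsto_intros)
  then show "((\<lambda>c. exp (\<bar>\<gamma>\<bar> * B) * (exp (\<bar>c - \<gamma>\<bar> * B) - 1)) \<longlongrightarrow> 0) (at \<gamma>)" by simp
qed

lemma cgf_cont:
  fixes M :: "'a measure" and f :: "'a \<Rightarrow> real"
  assumes M: "prob_space M" and f: "f \<in> borel_measurable M" and B: "\<forall>x \<in> space M. \<bar>f x\<bar> \<le> B"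
    and \<gamma>: "\<gamma> \<noteq> 0"
  shows "((\<lambda>c. cgf_term M f c) \<longlongrightarrow> cgf_term M f \<gamma>) (at \<gamma>)"
  unfolding cgf_term_def
  using exp_int(2)[OF M f B, of \<gamma>] \<gamma>
  by (intro tendsto_intros E_cont[OF M f B]) auto

lemma cgf_near:
  fixes M :: "'a measure" and f :: "'a \<Rightarrow> real"
  assumes M: "prob_space M" and f: "f \<in> borel_measurable M" and B: "\<forall>x \<in> space M. \<bar>f x\<bar> \<le> B"
    and \<gamma>: "\<gamma> \<noteq> 0" and e: "e > 0"
  shows "\<exists>d>0. \<forall>c. c \<noteq> \<gamma> \<and> \<bar>c - \<gamma>\<bar> < d \<longrightarrow> \<bar>cgf_term M f c - cgf_term M f \<gamma>\<bar> < e"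
  using LIM_D[OF cgf_cont[OF M f B \<gamma>] e] by simp


lemma alg_phi:
  fixes K T M N X m r :: real
  assumes "N * m = M" "m \<noteq> 0"
  shows "K * (T * M) - K * r * N * X - K * (M - r * N * m) = M * (K * (T - 1 - r * (X / m - 1)))"
proof -
  have N: "N = M / m" using assms by (simp add: field_simps)
  show ?thesis unfolding N using assms(2) by (simp add: field_simps)
qed

lemma cgf_strict:
  fixes P :: "'a measure" and g :: "'a \<Rightarrow> real" and \<gamma> \<beta> :: real
  assumes P: "prob_space P" and g: "g \<in> borel_measurable P" and B: "\<forall>x \<in> space P. \<bar>g x\<bar> \<le> B"
    and nc: "\<not> (\<exists>c. AE x in P. g x = c)"
    and \<gamma>: "\<gamma> \<noteq> 0" and \<beta>: "\<beta> \<noteq> 0" "\<gamma> < \<beta>"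
  shows "cgf_term P g \<gamma> < cgf_term P g \<beta>"
proof -
  interpret prob_space P by fact
  define m where "m = integral\<^sup>L P (\<lambda>x. exp (\<gamma> * g x))"
  define E where "E = integral\<^sup>L P (\<lambda>x. exp (\<beta> * g x))"
  define r where "r = \<beta> / \<gamma>"
  define K where "K = r * (r - 1)"
  have mpos: "m > 0" unfolding m_def using exp_int(2)[OF P g B] .
  have Epos: "E > 0" unfolding E_def using exp_int(2)[OF P g B] .
  have r0: "r \<noteq> 0" "r \<noteq> 1" unfolding r_def using \<gamma> \<beta> by auto
  have rg: "r * \<gamma> = \<beta>" unfolding r_def using \<gamma> by simp
  define \<phi> where "\<phi> = (\<lambda>x. K * exp (\<beta> * g x) - K * r * m powr (r - 1) * exp (\<gamma> * g x)
       - K * (m powr r - r * m powr (r - 1) * m))"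
  have phi_eq: "\<phi> x = m powr r * (r * (r - 1) * ((exp (\<gamma> * g x) / m) powr r - 1 - r * (exp (\<gamma> * g x) / m - 1)))" for x
  proof -
    have e1: "exp (\<beta> * g x) = (exp (\<gamma> * g x) / m) powr r * m powr r"
    proof -
      have "(exp (\<gamma> * g x) / m) powr r * m powr r = exp (\<gamma> * g x) powr r"
        using mpos by (simp add: powr_divide)
      also have "\<dots> = exp (r * \<gamma> * g x)" by (simp add: powr_def)
      finally show ?thesis using rg by simp
    qed
    have e2: "m powr (r - 1) * m = m powr r" using mpos by (simp add: powr_diff)
    have e3: "m powr (r - 1) * exp (\<gamma> * g x) = m powr r * (exp (\<gamma> * g x) / m)"
      using mpos by (simp add: powr_diff)
    show ?thesis unfolding \<phi>_def e1 K_def[symmetric]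
      using alg_phi[of "m powr (r - 1)" m "m powr r" K "(exp (\<gamma> * g x) / m) powr r" r "exp (\<gamma> * g x)"] e2 mpos
      by (simp add: mult.commute)
  qed
  have phi_nn: "\<phi> x \<ge> 0" for x
  proof (cases "exp (\<gamma> * g x) / m = 1")
    case True then show ?thesis by (simp add: phi_eq)
  next
    case False
    then show ?thesis unfolding phi_eq using tangent[OF _ False r0] mpos by (simp add: less_imp_le)
  qed
  have phi_zero: "\<phi> x = 0 \<Longrightarrow> g x = ln m / \<gamma>" for x
  proof -
    assume z: "\<phi> x = 0"
    have "exp (\<gamma> * g x) / m = 1"
    proof (rule ccontr)
      assume "exp (\<gamma> * g x) / m \<noteq> 1"
      then have "\<phi> x > 0" unfolding phi_eq using tangent[OF _ _ r0] mpos by simp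
      then show False using z by simp
    qed
    then have "exp (\<gamma> * g x) = m" using mpos by simp
    then have "\<gamma> * g x = ln m" by auto
    then show "g x = ln m / \<gamma>" using \<gamma> by (simp add: field_simps)
  qed
  have intE: "integrable P (\<lambda>x. exp (\<beta> * g x))" using exp_int(1)[OF P g B] .
  have intm: "integrable P (\<lambda>x. exp (\<gamma> * g x))" using exp_int(1)[OF P g B] .
  have intphi: "integrable P \<phi>" unfolding \<phi>_def using intE intm by auto
  have intval: "integral\<^sup>L P \<phi> = K * (E - m powr r)"
  proof -
    have "integral\<^sup>L P \<phi> = K * E - K * r * m powr (r - 1) * m - K * (m powr r - r * m powr (r - 1) * m)"
      unfolding \<phi>_def E_def m_def using intE intm by (simp add: prob_space)
    then show ?thesis by (simp add: algebra_simps)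
  qed
  have "integral\<^sup>L P \<phi> \<noteq> 0"
  proof
    assume "integral\<^sup>L P \<phi> = 0"
    then have "AE x in P. \<phi> x = 0" using integral_nonneg_eq_0_iff_AE[OF intphi] phi_nn by simp
    then have "AE x in P. g x = ln m / \<gamma>" by eventually_elim (rule phi_zero)
    then show False using nc by blast
  qed
  moreover have "integral\<^sup>L P \<phi> \<ge> 0" using phi_nn by (simp add: integral_nonneg)
  ultimately have pos: "K * (E - m powr r) > 0" unfolding intval by linarith
  have Ksign: "K = \<beta> * (\<beta> - \<gamma>) / (\<gamma> * \<gamma>)" unfolding K_def r_def using \<gamma> by (simp add: field_simps)
  have mr: "ln (m powr r) = r * ln m" using mpos by (simp add: ln_powr)
  have cg: "cgf_term P g \<gamma> = ln m / \<gamma>" "cgf_term P g \<beta> = ln E / \<beta>"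
    unfolding cgf_term_def m_def E_def by simp_all
  show ?thesis
  proof (cases "\<beta> > 0")
    case True
    have gg: "\<gamma> * \<gamma> > 0" using \<gamma> by (auto simp: zero_less_mult_iff linorder_neq_iff)
    have "\<beta> * (\<beta> - \<gamma>) > 0" using True \<beta> by simp
    then have "K > 0" unfolding Ksign using gg by (simp add: divide_pos_pos)
    then have "E > m powr r" using pos by (simp add: zero_less_mult_iff)
    then have "ln E > ln (m powr r)" using mpos Epos by (subst ln_less_cancel_iff) auto
    then have "ln E > r * ln m" using mr by simp
    then have "ln E > \<beta> * (ln m / \<gamma>)" unfolding r_def by (simp add: field_simps)
    then show ?thesis unfolding cg using True by (simp add: field_simps)
  next
    case False
    then have bn: "\<beta> < 0" using \<beta> by simp
    have gg: "\<gamma> * \<gamma> > 0" using \<gamma> by (auto simp: zero_less_mult_iff linorder_neq_iff)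
    have "\<beta> * (\<beta> - \<gamma>) < 0" using bn \<beta> by (simp add: mult_neg_pos)
    then have "K < 0" unfolding Ksign using gg by (simp add: divide_neg_pos)
    then have "E < m powr r" using pos by (simp add: zero_less_mult_iff)
    then have "ln E < ln (m powr r)" using Epos by (subst ln_less_cancel_iff) auto
    then have "ln E < r * ln m" using mr by simp
    then have "ln E < \<beta> * (ln m / \<gamma>)" unfolding r_def by (simp add: field_simps)
    then show ?thesis unfolding cg using bn by (simp add: field_simps)
  qed
qed




lemma plus_ineq:
  fixes P Q :: "'a measure" and g :: "'a \<Rightarrow> real" and \<gamma> :: real
  assumes P: "prob_space P" and Q: "prob_space Q" and s: "sets Q = sets P"
    and g: "g \<in> borel_measurable P" and B: "\<forall>x \<in> space P. \<bar>g x\<bar> \<le> B" and \<gamma>: "\<gamma> \<noteq> 0"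
  shows "ereal (cgf_term Q g \<gamma> - cgf_term P g \<gamma>) \<le> Xi_plus \<gamma> Q P g"
  unfolding Xi_plus_def
proof (rule INF_greatest)
  fix \<beta> assume "\<beta> \<in> {\<beta>. \<beta> > \<gamma> \<and> \<beta> \<noteq> 0}"
  then have b: "\<beta> > \<gamma>" "\<beta> \<noteq> 0" by auto
  show "ereal (cgf_term Q g \<gamma> - cgf_term P g \<gamma>) \<le> ereal (cgf_term P g \<beta> - cgf_term P g \<gamma>)
      + ereal (1 / (\<beta> - \<gamma>)) * renyi (\<beta> / (\<beta> - \<gamma>)) Q P"
    by (rule ereal_goal) (use b VI_all[OF P Q s g B \<gamma> b] in auto)
qed

lemma cgf_mono:
  fixes P :: "'a measure" and g :: "'a \<Rightarrow> real" and \<gamma> \<beta> :: real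
  assumes P: "prob_space P" and g: "g \<in> borel_measurable P" and B: "\<forall>x \<in> space P. \<bar>g x\<bar> \<le> B"
    and \<gamma>: "\<gamma> \<noteq> 0" and b: "\<beta> \<ge> \<gamma>" "\<beta> \<noteq> 0"
  shows "cgf_term P g \<gamma> \<le> cgf_term P g \<beta>"
proof (cases "\<beta> = \<gamma>")
  case False
  then have b': "\<beta> > \<gamma>" using b by simp
  have R0: "renyi (\<beta> / (\<beta> - \<gamma>)) P P = 0" using renyi_PP[OF P] .
  from VI_all[OF P P refl g B \<gamma> b' b(2)] R0 show ?thesis by (auto simp: zero_ereal_def)
qed simp

lemma renyi_nn:
  fixes P Q :: "'a measure" and \<gamma> \<beta> :: real
  assumes P: "prob_space P" and Q: "prob_space Q" and s: "sets Q = sets P"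
    and \<gamma>: "\<gamma> \<noteq> 0" and b: "\<beta> > \<gamma>" "\<beta> \<noteq> 0"
  shows "renyi (\<beta> / (\<beta> - \<gamma>)) Q P = \<infinity> \<or> (\<exists>r. renyi (\<beta> / (\<beta> - \<gamma>)) Q P = ereal r \<and> r \<ge> 0)"
proof -
  have "(\<lambda>x. 0::real) \<in> borel_measurable P" by simp
  moreover have "\<forall>x \<in> space P. \<bar>(\<lambda>x. 0::real) x\<bar> \<le> 0" by simp
  ultimately have Mz: "renyi (\<beta>/(\<beta>-\<gamma>)) Q P = \<infinity> \<or> (\<exists>r. renyi (\<beta>/(\<beta>-\<gamma>)) Q P = ereal r \<and>
     cgf_term Q (\<lambda>x. 0) \<gamma> - cgf_term P (\<lambda>x. 0) \<gamma> \<le> cgf_term P (\<lambda>x. 0) \<beta> - cgf_term P (\<lambda>x. 0) \<gamma> + (1/(\<beta>-\<gamma>)) * r)"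
    using VI_all[OF P Q s _ _ \<gamma> b] by blast
  have k: "1/(\<beta>-\<gamma>) > 0" using b by simp
  show ?thesis using Mz unfolding cgf_zero[OF P] cgf_zero[OF Q]
    using k b by (auto simp: zero_le_divide_iff)
qed

lemma plus_nn:
  fixes P Q :: "'a measure" and g :: "'a \<Rightarrow> real" and \<gamma> :: real
  assumes P: "prob_space P" and Q: "prob_space Q" and s: "sets Q = sets P"
    and g: "g \<in> borel_measurable P" and B: "\<forall>x \<in> space P. \<bar>g x\<bar> \<le> B" and \<gamma>: "\<gamma> \<noteq> 0"
  shows "Xi_plus \<gamma> Q P g \<ge> 0"
  unfolding Xi_plus_def
proof (rule INF_greatest)
  fix \<beta> assume "\<beta> \<in> {\<beta>. \<beta> > \<gamma> \<and> \<beta> \<noteq> 0}"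
  then have b: "\<beta> > \<gamma>" "\<beta> \<noteq> 0" by auto
  have m: "cgf_term P g \<gamma> \<le> cgf_term P g \<beta>" using cgf_mono[OF P g B \<gamma>] b by simp
  have "ereal 0 \<le> ereal (cgf_term P g \<beta> - cgf_term P g \<gamma>)
      + ereal (1 / (\<beta> - \<gamma>)) * renyi (\<beta> / (\<beta> - \<gamma>)) Q P"
    by (rule ereal_goal) (use b m renyi_nn[OF P Q s \<gamma> b] in \<open>auto intro!: add_nonneg_nonneg\<close>)
  then show "0 \<le> ereal (cgf_term P g \<beta> - cgf_term P g \<gamma>)
      + ereal (1 / (\<beta> - \<gamma>)) * renyi (\<beta> / (\<beta> - \<gamma>)) Q P" by (simp add: zero_ereal_def)
qed

lemma plus_PP:
  fixes P :: "'a measure" and g :: "'a \<Rightarrow> real" and \<gamma> :: real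
  assumes P: "prob_space P" and g: "g \<in> borel_measurable P" and B: "\<forall>x \<in> space P. \<bar>g x\<bar> \<le> B"
    and \<gamma>: "\<gamma> \<noteq> 0"
  shows "Xi_plus \<gamma> P P g = 0"
proof (rule antisym)
  show "0 \<le> Xi_plus \<gamma> P P g" using plus_nn[OF P P refl g B \<gamma>] .
  show "Xi_plus \<gamma> P P g \<le> 0"
  proof (rule ereal_le_epsilon2)
    fix e :: real assume e: "e > 0"
    obtain d where d: "d > 0" "\<And>c. c \<noteq> \<gamma> \<and> \<bar>c - \<gamma>\<bar> < d \<Longrightarrow> \<bar>cgf_term P g c - cgf_term P g \<gamma>\<bar> < e"
      using cgf_near[OF P g B \<gamma> e] by blast
    define \<beta> where "\<beta> = \<gamma> + min (d/2) (\<bar>\<gamma>\<bar>/2)"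
    have b: "\<beta> > \<gamma>" "\<beta> \<noteq> 0" "\<bar>\<beta> - \<gamma>\<bar> < d" unfolding \<beta>_def using d \<gamma> by (auto simp: min_def)
    have c: "cgf_term P g \<beta> - cgf_term P g \<gamma> < e" using d(2)[of \<beta>] b by auto
    have "Xi_plus \<gamma> P P g \<le> ereal (cgf_term P g \<beta> - cgf_term P g \<gamma>)
      + ereal (1 / (\<beta> - \<gamma>)) * renyi (\<beta> / (\<beta> - \<gamma>)) P P"
      unfolding Xi_plus_def by (rule INF_lower) (use b in auto)
    also have "\<dots> = ereal (cgf_term P g \<beta> - cgf_term P g \<gamma>)" using renyi_PP[OF P] by simp
    also have "\<dots> \<le> 0 + ereal e" using c by simp
    finally show "Xi_plus \<gamma> P P g \<le> 0 + ereal e" .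
  qed
qed


lemma exists_set:
  fixes P Q :: "'a measure" and \<gamma> :: real
  assumes P: "prob_space P" and Q: "prob_space Q" and s: "sets Q = sets P" and ne: "Q \<noteq> P"
  shows "\<exists>A \<in> sets P. (\<gamma> > 0 \<longrightarrow> measure P A < measure Q A) \<and> (\<gamma> < 0 \<longrightarrow> measure Q A < measure P A)"
proof -
  have sp: "space Q = space P" using sets_eq_imp_space_eq[OF s] .
  interpret P: prob_space P by fact
  interpret Q: prob_space Q by fact
  obtain A where A: "A \<in> sets P" "measure Q A \<noteq> measure P A"
  proof (rule ccontr)
    assume "\<not> thesis"
    then have "\<forall>A \<in> sets P. measure Q A = measure P A" using that by blast
    then have "Q = P"
      using s by (intro measure_eqI)
        (auto simp: P.emeasure_eq_measure Q.emeasure_eq_measure)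
    then show False using ne by simp
  qed
  have Ac: "space P - A \<in> sets P" using A by auto
  have cQ: "measure Q (space P - A) = 1 - measure Q A"
    using prob_space.prob_compl[OF Q, of A] A s sp by simp
  have cP: "measure P (space P - A) = 1 - measure P A"
    using prob_space.prob_compl[OF P, of A] A by simp
  show ?thesis
  proof (cases "measure Q A > measure P A")
    case True
    show ?thesis
    proof (cases "\<gamma> > 0")
      case True then show ?thesis using \<open>measure Q A > measure P A\<close> A by auto
    next
      case False then show ?thesis using \<open>measure Q A > measure P A\<close> Ac cP cQ
        by (intro bexI[of _ "space P - A"]) auto
    qed
  next
    case False
    then have lt: "measure Q A < measure P A" using A by simp
    show ?thesis
    proof (cases "\<gamma> > 0")
      case True then show ?thesis using lt Ac cP cQ
        by (intro bexI[of _ "space P - A"]) auto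
    next
      case False then show ?thesis using lt A by auto
    qed
  qed
qed

lemma cgf_ind:
  fixes M :: "'a measure" and \<gamma> :: real
  assumes M: "prob_space M" and A: "A \<in> sets M" and \<gamma>: "\<gamma> \<noteq> 0"
  shows "cgf_term M (\<lambda>x. indicator A x / \<gamma>) \<gamma> = ln (1 + (exp 1 - 1) * measure M A) / \<gamma>"
proof -
  interpret prob_space M by fact
  have "(\<lambda>x. exp (\<gamma> * (indicator A x / \<gamma>))) = (\<lambda>x. 1 + (exp 1 - 1) * indicator A x)"
    using \<gamma> by (auto simp: indicator_def)
  moreover have "integral\<^sup>L M (\<lambda>x. 1 + (exp 1 - 1) * indicator A x :: real) = 1 + (exp 1 - 1) * measure M A"
    using A by (subst Bochner_Integration.integral_add) (auto simp: prob_space emeasure_eq_measure intro!: integrable_real_indicator)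
  ultimately show ?thesis unfolding cgf_term_def by simp
qed

lemma plus_pos:
  fixes P Q :: "'a measure" and g :: "'a \<Rightarrow> real" and \<gamma> :: real
  assumes P: "prob_space P" and Q: "prob_space Q" and s: "sets Q = sets P"
    and g: "g \<in> borel_measurable P" and B: "\<forall>x \<in> space P. \<bar>g x\<bar> \<le> B" and \<gamma>: "\<gamma> \<noteq> 0"
    and nc: "\<not> (\<exists>c. AE x in P. g x = c)" and ne: "Q \<noteq> P"
  shows "Xi_plus \<gamma> Q P g > 0"
proof -
  have sp: "space Q = space P" using sets_eq_imp_space_eq[OF s] .
  obtain A where A: "A \<in> sets P" "\<gamma> > 0 \<longrightarrow> measure P A < measure Q A" "\<gamma> < 0 \<longrightarrow> measure Q A < measure P A"
    using exists_set[OF P Q s ne] by blast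
  define h where "h = (\<lambda>x. indicator A x / \<gamma>)"
  have hm: "h \<in> borel_measurable P" unfolding h_def using A by measurable
  have hB: "\<forall>x \<in> space P. \<bar>h x\<bar> \<le> 1 / \<bar>\<gamma>\<bar>" unfolding h_def by (auto simp: indicator_def)
  have AQ: "A \<in> sets Q" using A s by simp
  define D where "D = cgf_term Q h \<gamma> - cgf_term P h \<gamma>"
  have Dpos: "D > 0"
  proof -
    have e1: "exp 1 - 1 > (0::real)" by simp
    have pQ: "0 \<le> measure Q A" "0 \<le> measure P A" by auto
    have D_eq: "D = ln (1 + (exp 1 - 1) * measure Q A) / \<gamma> - ln (1 + (exp 1 - 1) * measure P A) / \<gamma>"
      unfolding D_def h_def using cgf_ind[OF Q AQ \<gamma>] cgf_ind[OF P A(1) \<gamma>] by simp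
    have pos1: "1 + (exp 1 - 1) * measure Q A > 0" "1 + (exp 1 - 1) * measure P A > 0"
      using e1 pQ by (auto intro!: add_pos_nonneg)
    show ?thesis
    proof (cases "\<gamma> > 0")
      case True
      then have "(exp 1 - 1) * measure P A < (exp 1 - 1) * measure Q A" using A(2) e1 by simp
      then have "ln (1 + (exp 1 - 1) * measure P A) < ln (1 + (exp 1 - 1) * measure Q A)"
        using pos1 by simp
      then show ?thesis unfolding D_eq using True by (simp add: divide_strict_right_mono)
    next
      case False
      then have gn: "\<gamma> < 0" using \<gamma> by simp
      then have "(exp 1 - 1) * measure Q A < (exp 1 - 1) * measure P A" using A(3) e1 by simp
      then have "ln (1 + (exp 1 - 1) * measure Q A) < ln (1 + (exp 1 - 1) * measure P A)"
        using pos1 by simp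
      then show ?thesis unfolding D_eq using gn by (simp add: divide_strict_right_mono_neg)
    qed
  qed
  obtain d where d: "d > 0" "\<And>c. c \<noteq> \<gamma> \<and> \<bar>c - \<gamma>\<bar> < d \<Longrightarrow> \<bar>cgf_term P h c - cgf_term P h \<gamma>\<bar> < D/2"
    using cgf_near[OF P hm hB \<gamma>, of "D/2"] Dpos by auto
  define \<beta>1 where "\<beta>1 = \<gamma> + min (d/2) (\<bar>\<gamma>\<bar>/2)"
  have b1: "\<beta>1 > \<gamma>" "\<beta>1 \<noteq> 0" "\<bar>\<beta>1 - \<gamma>\<bar> < d" unfolding \<beta>1_def using d \<gamma> by (auto simp: min_def)
  have "\<bar>cgf_term P h \<beta>1 - cgf_term P h \<gamma>\<bar> < D/2" using d(2)[of \<beta>1] b1 by auto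
  then have "2 * \<bar>cgf_term P h \<beta>1 - cgf_term P h \<gamma>\<bar> < D" by (simp add: field_simps)
  moreover have "2 * (cgf_term P h \<beta>1 - cgf_term P h \<gamma>) \<le> 2 * \<bar>cgf_term P h \<beta>1 - cgf_term P h \<gamma>\<bar>" by (intro mult_left_mono abs_ge_self) simp
  ultimately have "2 * (cgf_term P h \<beta>1 - cgf_term P h \<gamma>) < D" by (rule le_less_trans[rotated])
  then have hb1: "2 * cgf_term P h \<beta>1 < cgf_term P h \<gamma> + cgf_term Q h \<gamma>" unfolding D_def by (simp add: algebra_simps)
  define D2 where "D2 = cgf_term P g \<beta>1 - cgf_term P g \<gamma>"
  have D2pos: "D2 > 0" unfolding D2_def using cgf_strict[OF P g B nc \<gamma> b1(2) b1(1)] by simp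
  define m where "m = min (D/2) D2"
  have mpos: "m > 0" unfolding m_def using Dpos D2pos by simp
  have "m \<le> D/2" "m \<le> D2" unfolding m_def by auto
  then have mD: "2 * m \<le> D" "m \<le> D2" by (simp_all add: field_simps)
  have "ereal m \<le> Xi_plus \<gamma> Q P g"
    unfolding Xi_plus_def
  proof (rule INF_greatest)
    fix \<beta> assume "\<beta> \<in> {\<beta>. \<beta> > \<gamma> \<and> \<beta> \<noteq> 0}"
    then have b: "\<beta> > \<gamma>" "\<beta> \<noteq> 0" by auto
    have k: "1 / (\<beta> - \<gamma>) > 0" using b by simp
    have gm: "cgf_term P g \<gamma> \<le> cgf_term P g \<beta>" using cgf_mono[OF P g B \<gamma>] b by simp
    show "ereal m \<le> ereal (cgf_term P g \<beta> - cgf_term P g \<gamma>)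
      + ereal (1 / (\<beta> - \<gamma>)) * renyi (\<beta> / (\<beta> - \<gamma>)) Q P"
    proof (rule ereal_goal[OF k])
      show "renyi (\<beta> / (\<beta> - \<gamma>)) Q P = \<infinity> \<or> (\<exists>r. renyi (\<beta> / (\<beta> - \<gamma>)) Q P = ereal r \<and>
          m \<le> cgf_term P g \<beta> - cgf_term P g \<gamma> + 1 / (\<beta> - \<gamma>) * r)"
      proof (cases "\<beta> \<le> \<beta>1")
        case True
        have hm1: "cgf_term P h \<beta> \<le> cgf_term P h \<beta>1" using cgf_mono[OF P hm hB b(2) True b1(2)] .
        from VI_all[OF P Q s hm hB \<gamma> b] show ?thesis
        proof
          assume "renyi (\<beta> / (\<beta> - \<gamma>)) Q P = \<infinity>" then show ?thesis by simp
        next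
          assume "\<exists>r. renyi (\<beta>/(\<beta>-\<gamma>)) Q P = ereal r \<and>
            cgf_term Q h \<gamma> - cgf_term P h \<gamma> \<le> cgf_term P h \<beta> - cgf_term P h \<gamma> + (1/(\<beta>-\<gamma>)) * r"
          then obtain r where r: "renyi (\<beta>/(\<beta>-\<gamma>)) Q P = ereal r"
            "cgf_term Q h \<gamma> - cgf_term P h \<gamma> \<le> cgf_term P h \<beta> - cgf_term P h \<gamma> + (1/(\<beta>-\<gamma>)) * r" by blast
          have "m \<le> cgf_term P g \<beta> - cgf_term P g \<gamma> + 1 / (\<beta> - \<gamma>) * r"
            using r(2) hm1 hb1 gm mD(1) unfolding D_def by (simp add: algebra_simps)
          then show ?thesis using r(1) by blast
        qed
      next
        case False
        have gm1: "cgf_term P g \<beta>1 \<le> cgf_term P g \<beta>" using cgf_mono[OF P g B b1(2) _ b(2)] False by simp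
        from renyi_nn[OF P Q s \<gamma> b] show ?thesis
        proof
          assume "renyi (\<beta> / (\<beta> - \<gamma>)) Q P = \<infinity>" then show ?thesis by simp
        next
          assume "\<exists>r. renyi (\<beta>/(\<beta>-\<gamma>)) Q P = ereal r \<and> r \<ge> 0"
          then obtain r where r: "renyi (\<beta>/(\<beta>-\<gamma>)) Q P = ereal r" "r \<ge> 0" by blast
          have "1 / (\<beta> - \<gamma>) * r \<ge> 0" using k r(2) by simp
          then have "m \<le> cgf_term P g \<beta> - cgf_term P g \<gamma> + 1 / (\<beta> - \<gamma>) * r"
            using gm1 mD(2) unfolding D2_def by linarith
          then show ?thesis using r(1) by blast
        qed
      qed
    qed
  qed
  then show ?thesis using mpos by (metis ereal_less(2) order_less_le_trans)
qed


theorem mainTheorem12: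
  fixes P Q :: "'a measure" and g :: "'a \<Rightarrow> real" and \<gamma> :: real
  assumes "prob_space P" and "prob_space Q" and "sets Q = sets P"
    and "g \<in> borel_measurable P" and "\<exists>B. \<forall>x \<in> space P. \<bar>g x\<bar> \<le> B"
    and "\<gamma> \<noteq> 0"
  shows "Xi_minus \<gamma> Q P g \<le> ereal (cgf_term Q g \<gamma> - cgf_term P g \<gamma>)
      \<and> ereal (cgf_term Q g \<gamma> - cgf_term P g \<gamma>) \<le> Xi_plus \<gamma> Q P g
      \<and> Xi_minus \<gamma> Q P g = - Xi_plus (- \<gamma>) Q P (\<lambda>x. - g x)
      \<and> Xi_plus \<gamma> Q P g \<ge> 0 \<and> - Xi_minus \<gamma> Q P g \<ge> 0
      \<and> ((\<not> (\<exists>c. AE x in P. g x = c)) \<longrightarrow>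
           ((Xi_plus \<gamma> Q P g = 0 \<longleftrightarrow> Q = P) \<and> (Xi_minus \<gamma> Q P g = 0 \<longleftrightarrow> Q = P)))"
proof -
  note P = assms(1) and Q = assms(2) and s = assms(3) and g = assms(4) and \<gamma> = assms(6)
  obtain Bv where B: "\<forall>x \<in> space P. \<bar>g x\<bar> \<le> Bv" using assms(5) by blast
  have ng: "(\<lambda>x. - g x) \<in> borel_measurable P" using g by simp
  have nB: "\<forall>x \<in> space P. \<bar>(\<lambda>x. - g x) x\<bar> \<le> Bv" using B by simp
  have n\<gamma>: "- \<gamma> \<noteq> 0" using \<gamma> by simp
  have idn: "Xi_minus \<gamma> Q P g = - Xi_plus (- \<gamma>) Q P (\<lambda>x. - g x)" by (rule ident[OF \<gamma>])
  have i1: "ereal (cgf_term Q g \<gamma> - cgf_term P g \<gamma>) \<le> Xi_plus \<gamma> Q P g"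
    by (rule plus_ineq[OF P Q s g B \<gamma>])
  have i2: "ereal (cgf_term Q (\<lambda>x. - g x) (- \<gamma>) - cgf_term P (\<lambda>x. - g x) (- \<gamma>)) \<le> Xi_plus (- \<gamma>) Q P (\<lambda>x. - g x)"
    by (rule plus_ineq[OF P Q s ng nB n\<gamma>])
  then have "- ereal (cgf_term Q g \<gamma> - cgf_term P g \<gamma>) \<le> Xi_plus (- \<gamma>) Q P (\<lambda>x. - g x)"
    unfolding cgf_neg by simp
  then have i3: "Xi_minus \<gamma> Q P g \<le> ereal (cgf_term Q g \<gamma> - cgf_term P g \<gamma>)"
    unfolding idn by (subst ereal_uminus_le_reorder) simp
  have n1: "Xi_plus \<gamma> Q P g \<ge> 0" by (rule plus_nn[OF P Q s g B \<gamma>])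
  have n2: "Xi_plus (- \<gamma>) Q P (\<lambda>x. - g x) \<ge> 0" by (rule plus_nn[OF P Q s ng nB n\<gamma>])
  then have n3: "- Xi_minus \<gamma> Q P g \<ge> 0" unfolding idn by simp
  have iffs: "(Xi_plus \<gamma> Q P g = 0 \<longleftrightarrow> Q = P) \<and> (Xi_minus \<gamma> Q P g = 0 \<longleftrightarrow> Q = P)"
    if nc: "\<not> (\<exists>c. AE x in P. g x = c)"
  proof -
    have nc': "\<not> (\<exists>c. AE x in P. - g x = c)"
    proof
      assume "\<exists>c. AE x in P. - g x = c"
      then obtain c where "AE x in P. - g x = c" by blast
      then have "AE x in P. g x = - c" by eventually_elim simp
      then show False using nc by blast
    qed
    have a: "Xi_plus \<gamma> Q P g = 0 \<longleftrightarrow> Q = P"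
    proof
      assume z: "Xi_plus \<gamma> Q P g = 0"
      show "Q = P"
      proof (rule ccontr)
        assume "Q \<noteq> P"
        then have "Xi_plus \<gamma> Q P g > 0" by (rule plus_pos[OF P Q s g B \<gamma> nc])
        then show False using z by simp
      qed
    next
      assume "Q = P"
      then show "Xi_plus \<gamma> Q P g = 0" using plus_PP[OF P g B \<gamma>] by simp
    qed
    have b: "Xi_plus (- \<gamma>) Q P (\<lambda>x. - g x) = 0 \<longleftrightarrow> Q = P"
    proof
      assume z: "Xi_plus (- \<gamma>) Q P (\<lambda>x. - g x) = 0"
      show "Q = P"
      proof (rule ccontr)
        assume "Q \<noteq> P"
        then have "Xi_plus (- \<gamma>) Q P (\<lambda>x. - g x) > 0" by (rule plus_pos[OF P Q s ng nB n\<gamma> nc'])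
        then show False using z by simp
      qed
    next
      assume "Q = P"
      then show "Xi_plus (- \<gamma>) Q P (\<lambda>x. - g x) = 0" using plus_PP[OF P ng nB n\<gamma>] by simp
    qed
    have "Xi_minus \<gamma> Q P g = 0 \<longleftrightarrow> Xi_plus (- \<gamma>) Q P (\<lambda>x. - g x) = 0"
      unfolding idn by (simp add: ereal_uminus_eq_reorder)
    then show ?thesis using a b by simp
  qed
  show ?thesis using i1 i3 idn n1 n3 iffs by blast
qed

end
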